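(* Let $f \ge 1$ and $n \ge 5f+1$. Consider $n$ robots on the real line operating in the CORDA model under a fully asynchronous scheduler, at most $f$ of which are Byzantine. If every correct robot executes the convergence algorithm described in the context, then the correct robots achieve Byzantine convergence: for every $\epsilon > 0$ there is a time $t_\epsilon$ such that for all $t > t_\epsilon$ and all correct robots $i,j$, $|U_i(t) - U_j(t)| < \epsilon$, where $U_i(t)$ is the position of robot $i$ at time $t$.
   Context: Model: $n$ robots are located on the real line. At most $f$ of them are Byzantine: they may behave arbitrarily, and an adversary chooses their positions at all times. The remaining $m \ge n-f$ robots are correct. Robots are anonymous, meaning they all run the same deterministic program. They are oblivious, with no memory between cycles. They share no common orientation: each robot observes positions in its own coordinate system. They have unlimited visibility and strong multiplicity detection, so an observation returns the full multiset of all $n$ positions. Each correct robot repeatedly executes Look–Compute–Move cycles: - Look: take a snapshot of all positions. - Compute: compute a destination from the snapshot. - Move: move toward the destination. The adversary may stop robot $i$ before it reaches the destination, but only after it has travelled at least a fixed distance $\delta_i>0$ toward it (or has reached it). In the CORDA model, phases of different robots may interleave arbitrarily, so a robot may compute and move based on an outdated snapshot. A fully asynchronous scheduler only guarantees that every robot is activated infinitely often. Algorithm: let robot $i$'s snapshot at time $t$ be sorted as $P_1(t) \le \dots \le P_n(t)$, and let $x_i$ be robot $i$'s own position. - Robot $i$ is elected iff $x_i \le P_{f+1}(t)$ or $x_i \ge P_{n-f}(t)$. - $trim^i_{2f}(P(t))$ is the multiset obtained from $P(t)$ by removing, among the $2f$ smallest positions, those strictly smaller than $x_i$, and, among the $2f$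 largest positions, those strictly larger than $x_i$. Thus its minimum is $\min(x_i, P_{2f+1}(t))$ and its maximum is $\max(x_i, P_{n-2f}(t))$. - $center(S)$ is the midpoint $(\min S + \max S)/2$. - If elected, robot $i$ moves toward $center(trim^i_{2f}(P(t)))$; otherwise it does not move. *)

theory Defs
  imports Complex_Main "HOL-Library.Multiset"
begin

text \<open>Positions of all robots: U j t is the position of robot j (j < n) at time t,
  expressed in a fixed global coordinate system.\<close>

text \<open>Snapshot taken at time t, sorted: P_1 <= ... <= P_n, i.e. element k-1 of the list is P_k.\<close>
definition snapshot :: "nat \<Rightarrow> (nat \<Rightarrow> real \<Rightarrow> real) \<Rightarrow> real \<Rightarrow> real list" where
  "snapshot n U t = sort (map (\<lambda>j. U j t) [0..<n])"

text \<open>Robot at position x is elected iff x <= P_{f+1} or x >= P_{n-f}.\<close>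
definition elected :: "nat \<Rightarrow> nat \<Rightarrow> real list \<Rightarrow> real \<Rightarrow> bool" where
  "elected n f P x \<longleftrightarrow> x \<le> P ! f \<or> x \<ge> P ! (n - f - 1)"

definition trim2f :: "nat \<Rightarrow> nat \<Rightarrow> real list \<Rightarrow> real \<Rightarrow> real multiset" where
  "trim2f n f P x =
     mset P - mset (filter (\<lambda>y. y < x) (take (2 * f) P))
            - mset (filter (\<lambda>y. y > x) (drop (n - 2 * f) P))"

definition center :: "real multiset \<Rightarrow> real" where
  "center S = (Min (set_mset S) + Max (set_mset S)) / 2"

definition destination :: "nat \<Rightarrow> nat \<Rightarrow> real list \<Rightarrow> real \<Rightarrow> real" where
  "destination n f P x = (if elected n f P x then center (trim2f n f P x) else x)"

definition between :: "real \<Rightarrow> real \<Rightarrow> real \<Rightarrow> bool" where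
  "between a b y \<longleftrightarrow> min a b \<le> y \<and> y \<le> max a b"

text \<open>Robot i is correct and executes the algorithm in the CORDA model under a fully
  asynchronous scheduler: its k-th cycle has Look at time tL k, and its Move phase occupies
  the interval [tMs k, tMe k]; outside Move phases the robot does not move; during a
  Move phase it moves continuously and monotonically from its position at Look time towards
  the destination computed from the (possibly outdated) snapshot taken at Look time, and it is
  stopped only after travelling at least delta or reaching the destination. Every robot is
  activated infinitely often (Look times are unbounded).\<close>
definition correct_robot ::
  "nat \<Rightarrow> nat \<Rightarrow> (nat \<Rightarrow> real \<Rightarrow> real) \<Rightarrow> nat \<Rightarrow> real
     \<Rightarrow> (nat \<Rightarrow> real) \<Rightarrow> (nat \<Rightarrow> real) \<Rightarrow> (nat \<Rightarrow> real) \<Rightarrow> bool" where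
  "correct_robot n f U i \<delta> tL tMs tMe \<longleftrightarrow>
     \<delta> > 0 \<and>
     0 \<le> tL 0 \<and>
     (\<forall>k. tL k \<le> tMs k \<and> tMs k \<le> tMe k \<and> tMe k \<le> tL (Suc k)) \<and>
     filterlim tL at_top sequentially \<and>
     (\<forall>t\<in>{0..tMs 0}. U i t = U i 0) \<and>
     (\<forall>k. \<forall>t\<in>{tMe k..tMs (Suc k)}. U i t = U i (tMe k)) \<and>
     (\<forall>k. let p = U i (tL k);
              d = destination n f (snapshot n U (tL k)) p
          in continuous_on {tMs k..tMe k} (U i) \<and>
             (\<forall>s s'. tMs k \<le> s \<and> s \<le> s' \<and> s' \<le> tMe k \<longrightarrow> between (U i s) d (U i s')) \<and>
             \<bar>U i (tMe k) - p\<bar> \<ge> min \<delta> \<bar>d - p\<bar>)"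

end

theory Submission
  imports Defs
begin


section \<open>Sorted list counting\<close>

lemma cnt_sorted_ge:
  fixes xs :: "real list"
  assumes "sorted xs" "q < length xs" "xs ! q \<ge> z"
  shows "card {i. i < length xs \<and> xs ! i \<ge> z} \<ge> length xs - q"
proof -
  have "{q..<length xs} \<subseteq> {i. i < length xs \<and> xs ! i \<ge> z}"
  proof
    fix i assume "i \<in> {q..<length xs}"
    hence "xs ! q \<le> xs ! i" using sorted_nth_mono[OF assms(1)] by auto
    thus "i \<in> {i. i < length xs \<and> xs ! i \<ge> z}" using \<open>i \<in> {q..<length xs}\<close> assms(3) by auto
  qed
  from card_mono[OF _ this] show ?thesis by simp
qed

lemma cnt_sorted_le:
  fixes xs :: "real list"
  assumes "sorted xs" "q < length xs" "xs ! q \<le> z"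
  shows "card {i. i < length xs \<and> xs ! i \<le> z} \<ge> Suc q"
proof -
  have "{0..q} \<subseteq> {i. i < length xs \<and> xs ! i \<le> z}"
  proof
    fix i assume "i \<in> {0..q}"
    hence "xs ! i \<le> xs ! q" using sorted_nth_mono[OF assms(1)] assms(2) by auto
    thus "i \<in> {i. i < length xs \<and> xs ! i \<le> z}" using \<open>i \<in> {0..q}\<close> assms(2,3) by auto
  qed
  from card_mono[OF _ this] show ?thesis by simp
qed

lemma sorted_le_of_cnt:
  fixes xs :: "real list"
  assumes "sorted xs" "q < length xs" "card {i. i < length xs \<and> xs ! i \<le> z} \<ge> Suc q"
  shows "xs ! q \<le> z"
proof (rule ccontr)
  assume "\<not> xs ! q \<le> z"
  have "{i. i < length xs \<and> xs ! i \<le> z} \<subseteq> {0..<q}"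
  proof
    fix i assume i: "i \<in> {i. i < length xs \<and> xs ! i \<le> z}"
    show "i \<in> {0..<q}"
    proof (rule ccontr)
      assume "i \<notin> {0..<q}"
      hence "xs ! q \<le> xs ! i" using sorted_nth_mono[OF assms(1)] i by auto
      thus False using i \<open>\<not> xs ! q \<le> z\<close> by auto
    qed
  qed
  from card_mono[OF _ this] assms(3) show False by simp
qed

lemma sorted_ge_of_cnt:
  fixes xs :: "real list"
  assumes "sorted xs" "q < length xs" "card {i. i < length xs \<and> xs ! i \<ge> z} \<ge> length xs - q"
  shows "xs ! q \<ge> z"
proof (rule ccontr)
  assume "\<not> xs ! q \<ge> z"
  have "{i. i < length xs \<and> xs ! i \<ge> z} \<subseteq> {Suc q..<length xs}"
  proof
    fix i assume i: "i \<in> {i. i < length xs \<and> xs ! i \<ge> z}"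
    show "i \<in> {Suc q..<length xs}"
    proof (rule ccontr)
      assume "i \<notin> {Suc q..<length xs}"
      hence "xs ! i \<le> xs ! q" using sorted_nth_mono[OF assms(1)] i assms(2) by auto
      thus False using i \<open>\<not> xs ! q \<ge> z\<close> by auto
    qed
  qed
  from card_mono[OF _ this] assms(3) assms(2) show False by simp
qed

lemma snap_len: "length (snapshot n U t) = n"
  by (simp add: snapshot_def)

lemma snap_sorted: "sorted (snapshot n U t)"
  by (simp add: snapshot_def)

lemma snap_cnt:
  "card {i. i < n \<and> Q (snapshot n U t ! i)} = card {j. j < n \<and> Q (U j t)}"
proof -
  have "card {i. i < n \<and> Q (snapshot n U t ! i)} = length (filter Q (snapshot n U t))"
    by (simp add: length_filter_conv_card snap_len)
  also have "\<dots> = size (filter_mset Q (mset (snapshot n U t)))"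
    by (metis mset_filter size_mset)
  also have "\<dots> = size (filter_mset Q (mset (map (\<lambda>j. U j t) [0..<n])))"
    by (simp add: snapshot_def)
  also have "\<dots> = length (filter Q (map (\<lambda>j. U j t) [0..<n]))"
    by (metis mset_filter size_mset)
  also have "\<dots> = card {i. i < n \<and> Q (map (\<lambda>j. U j t) [0..<n] ! i)}"
    by (simp add: length_filter_conv_card)
  also have "\<dots> = card {j. j < n \<and> Q (U j t)}"
    by (rule arg_cong[where f=card]) auto
  finally show ?thesis .
qed

lemma card_C_le:
  fixes n :: nat
  assumes "C \<subseteq> {..<n}"
  shows "card {j. j < n \<and> Q j} \<le> card {j\<in>C. Q j} + (n - card C)"
proof -
  have "{j. j < n \<and> Q j} \<subseteq> {j\<in>C. Q j} \<union> ({..<n} - C)" by auto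
  hence "card {j. j < n \<and> Q j} \<le> card ({j\<in>C. Q j} \<union> ({..<n} - C))"
  proof (intro card_mono)
    have "finite C" using assms finite_subset by blast
    thus "finite ({j\<in>C. Q j} \<union> ({..<n} - C))" by auto
  qed auto
  also have "\<dots> \<le> card {j\<in>C. Q j} + card ({..<n} - C)" by (rule card_Un_le)
  also have "card ({..<n} - C) = n - card C" using assms
    by (simp add: card_Diff_subset finite_subset)
  finally show ?thesis .
qed

lemma card_C_ge:
  fixes n :: nat
  assumes "C \<subseteq> {..<n}"
  shows "card {j\<in>C. Q j} \<le> card {j. j < n \<and> Q j}"
proof (rule card_mono)
  show "finite {j. j < n \<and> Q j}" by (rule finite_subset[where B="{0..<n}"]) auto
qed (use assms in auto)


section \<open>Closed form of the destination\<close>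

lemma elem_drop_ge:
  fixes xs :: "real list"
  assumes "sorted xs" "y \<in> set (drop k xs)"
  shows "xs ! k \<le> y"
proof -
  from assms(2) obtain j where j: "j < length (drop k xs)" "drop k xs ! j = y"
    by (auto simp: in_set_conv_nth)
  hence "y = xs ! (k + j)" "k + j < length xs" by auto
  thus ?thesis using sorted_nth_mono[OF assms(1), of k "k+j"] by simp
qed

lemma elem_take_le:
  fixes xs :: "real list"
  assumes "sorted xs" "k \<le> length xs" "y \<in> set (take k xs)"
  shows "y \<le> xs ! (k - 1)"
proof -
  from assms(3) obtain j where j: "j < length (take k xs)" "take k xs ! j = y"
    by (auto simp: in_set_conv_nth)
  hence "y = xs ! j" "j \<le> k - 1" "k - 1 < length xs" using assms(2) by auto
  thus ?thesis using sorted_nth_mono[OF assms(1), of j "k - 1"] by simp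
qed

lemma count_take_drop:
  "count (mset xs) v = count (mset (take k xs)) v + count (mset (drop k xs)) v"
  by (metis append_take_drop_id count_union mset_append)

lemma trim_count:
  "count (trim2f n f P x) v =
     count (mset P) v - (if v < x then count (mset (take (2*f) P)) v else 0)
        - (if v > x then count (mset (drop (n - 2*f) P)) v else 0)"
  by (simp add: trim2f_def mset_filter)

lemma center_trim:
  fixes P :: "real list"
  assumes srt: "sorted P" and len: "length P = n" and xP: "x \<in> set P" and nf: "4 * f < n"
  shows "center (trim2f n f P x) = (min x (P ! (2*f)) + max x (P ! (n - 2*f - 1))) / 2"
proof -
  define T where "T = trim2f n f P x"
  define Q1 where "Q1 = P ! (2*f)"
  define Q2 where "Q2 = P ! (n - 2*f - 1)"
  have fin: "finite (set_mset T)" by simp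
  have cx: "count (mset P) x > 0" using xP by simp
  have lowb: "min x Q1 \<le> v" if "v \<in># T" for v
  proof (rule ccontr)
    assume "\<not> min x Q1 \<le> v"
    hence vx: "v < x" and vq: "v < Q1" by auto
    have "v \<notin> set (drop (2*f) P)" using elem_drop_ge[OF srt, of v "2*f"] vq Q1_def by force
    hence "count (mset (drop (2*f) P)) v = 0" by (simp add: count_mset_0_iff)
    hence "count T v = 0" unfolding T_def trim_count
      using count_take_drop[of P v "2*f"] vx by simp
    thus False using that by (metis count_greater_zero_iff less_irrefl)
  qed
  have memlo: "min x Q1 \<in># T"
  proof (cases "x \<le> Q1")
    case True
    have "count T x > 0" unfolding T_def trim_count using cx by simp
    thus ?thesis using True by simp
  next
    case False
    have "2*f < length P" using nf len by simp
    hence "drop (2*f) P ! 0 \<in> set (drop (2*f) P)" by (intro nth_mem) simp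
    hence "Q1 \<in> set (drop (2*f) P)" unfolding Q1_def using \<open>2*f < length P\<close> by simp
    hence "count (mset (drop (2*f) P)) Q1 > 0" by simp
    hence "count T Q1 > 0" unfolding T_def trim_count
      using count_take_drop[of P Q1 "2*f"] False by simp
    thus ?thesis using False by simp
  qed
  have upb: "v \<le> max x Q2" if "v \<in># T" for v
  proof (rule ccontr)
    assume "\<not> v \<le> max x Q2"
    hence vx: "v > x" and vq: "v > Q2" by auto
    have "v \<notin> set (take (n - 2*f) P)" using elem_take_le[OF srt, of "n - 2*f" v] vq Q2_def len by force
    hence "count (mset (take (n - 2*f) P)) v = 0" by (simp add: count_mset_0_iff)
    hence "count T v = 0" unfolding T_def trim_count
      using count_take_drop[of P v "n - 2*f"] vx by simp
    thus False using that by (metis count_greater_zero_iff less_irrefl)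
  qed
  have memhi: "max x Q2 \<in># T"
  proof (cases "Q2 \<le> x")
    case True
    have "count T x > 0" unfolding T_def trim_count using cx by simp
    thus ?thesis using True by simp
  next
    case False
    have "n - 2*f - 1 < length (take (n - 2*f) P)" using nf len by auto
    hence "take (n - 2*f) P ! (n - 2*f - 1) \<in> set (take (n - 2*f) P)" by (rule nth_mem)
    moreover have "take (n - 2*f) P ! (n - 2*f - 1) = Q2" unfolding Q2_def using nf
      by (intro nth_take) simp
    ultimately have "Q2 \<in> set (take (n - 2*f) P)" by simp
    hence "count (mset (take (n - 2*f) P)) Q2 > 0" by simp
    hence "count T Q2 > 0" unfolding T_def trim_count
      using count_take_drop[of P Q2 "n - 2*f"] False by simp
    thus ?thesis using False by simp
  qed
  have "Min (set_mset T) = min x Q1"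
    by (rule Min_eqI) (use fin lowb memlo in auto)
  moreover have "Max (set_mset T) = max x Q2"
    by (rule Max_eqI) (use fin upb memhi in auto)
  ultimately show ?thesis unfolding center_def T_def Q1_def Q2_def by simp
qed

lemma dest_formula:
  fixes P :: "real list"
  assumes "sorted P" "length P = n" "x \<in> set P" "4 * f < n"
  shows "destination n f P x =
    (if x \<le> P ! f \<or> x \<ge> P ! (n - f - 1) then (min x (P ! (2*f)) + max x (P ! (n - 2*f - 1))) / 2 else x)"
  using center_trim[OF assms] by (simp add: destination_def elected_def)



context
  fixes n f :: nat and C :: "nat set" and U :: "nat \<Rightarrow> real \<Rightarrow> real" and t :: real and i :: nat
  assumes Csub: "C \<subseteq> {..<n}" and cardC: "card C \<ge> n - f" and nf: "4 * f < n" and iC: "i \<in> C"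
begin

private abbreviation "P \<equiv> snapshot n U t"
private abbreviation "x \<equiv> U i t"
private abbreviation "d \<equiv> destination n f (snapshot n U t) (U i t)"

private lemma iN: "i < n" using Csub iC by auto

private lemma cardC_le: "card C \<le> n"
  using card_mono[OF _ Csub] by simp

private lemma xP: "x \<in> set P"
  using iN by (auto simp: snapshot_def)

private lemma df: "d = (if x \<le> P ! f \<or> x \<ge> P ! (n - f - 1) then (min x (P ! (2*f)) + max x (P ! (n - 2*f - 1))) / 2 else x)"
  by (rule dest_formula[OF snap_sorted snap_len xP nf])

private lemma mono: "a \<le> b \<Longrightarrow> b < n \<Longrightarrow> P ! a \<le> P ! b"
  using sorted_nth_mono[OF snap_sorted] snap_len by metis

private lemma cntC_ge: "card {j. j < n \<and> Q (U j t)} \<ge> k \<Longrightarrow> card {j\<in>C. Q (U j t)} \<ge> k - (n - card C)"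
  using card_C_le[OF Csub, where Q="\<lambda>j. Q (U j t)"] by linarith

private lemma cntP_ge: "card {j\<in>C. Q (U j t)} \<ge> k \<Longrightarrow> card {i. i < n \<and> Q (P ! i)} \<ge> k"
  using card_C_ge[OF Csub, where Q="\<lambda>j. Q (U j t)"] snap_cnt[where n=n and Q=Q and U=U and t=t] by linarith

private lemma sle: "q < n \<Longrightarrow> card {j\<in>C. U j t \<le> z} \<ge> Suc q \<Longrightarrow> P ! q \<le> z"
  using sorted_le_of_cnt[where xs=P and q=q and z=z] snap_sorted cntP_ge[where Q="\<lambda>v. v \<le> z" and k="Suc q"] snap_len by simp

private lemma sge: "q < n \<Longrightarrow> card {j\<in>C. U j t \<ge> z} \<ge> n - q \<Longrightarrow> P ! q \<ge> z"
  using sorted_ge_of_cnt[where xs=P and q=q and z=z] snap_sorted cntP_ge[where Q="\<lambda>v. v \<ge> z" and k="n - q"] snap_len by simp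

private lemma cge: "q < n \<Longrightarrow> P ! q \<ge> z \<Longrightarrow> card {j\<in>C. U j t \<ge> z} \<ge> card C - q"
proof -
  assume "q < n" "P ! q \<ge> z"
  from cnt_sorted_ge[where xs=P and q=q and z=z] snap_sorted this snap_len
  have "card {i. i < n \<and> P ! i \<ge> z} \<ge> n - q" by simp
  hence "card {j. j < n \<and> U j t \<ge> z} \<ge> n - q" using snap_cnt[where n=n and Q="\<lambda>v. v \<ge> z" and U=U and t=t] by simp
  from cntC_ge[where Q="\<lambda>v. v \<ge> z", OF this] cardC_le show ?thesis by linarith
qed

private lemma cle: "q < n \<Longrightarrow> P ! q \<le> z \<Longrightarrow> card {j\<in>C. U j t \<le> z} \<ge> Suc q - (n - card C)"
proof -
  assume "q < n" "P ! q \<le> z"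
  from cnt_sorted_le[where xs=P and q=q and z=z] snap_sorted this snap_len
  have "card {i. i < n \<and> P ! i \<le> z} \<ge> Suc q" by simp
  hence "card {j. j < n \<and> U j t \<le> z} \<ge> Suc q" using snap_cnt[where n=n and Q="\<lambda>v. v \<le> z" and U=U and t=t] by simp
  from cntC_ge[where Q="\<lambda>v. v \<le> z", OF this] show ?thesis .
qed

lemma dest_gt_count: "d > x \<Longrightarrow> card {j\<in>C. U j t \<ge> x} \<ge> card C - f"
proof -
  assume dx: "d > x"
  have el: "x \<le> P ! f"
  proof (rule ccontr)
    assume "\<not> x \<le> P ! f"
    with dx df have h: "x \<ge> P ! (n - f - 1)" by (auto split: if_splits)
    have "P ! (n - 2*f - 1) \<le> P ! (n - f - 1)" by (rule mono) (use nf in auto)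
    with h have "max x (P ! (n - 2*f - 1)) = x" by simp
    with dx df h show False by (auto split: if_splits)
  qed
  from cge[OF _ el] nf show ?thesis by simp
qed

lemma dest_lt_count: "d < x \<Longrightarrow> card {j\<in>C. U j t \<le> x} \<ge> card C - f"
proof -
  assume dx: "d < x"
  have el: "x \<ge> P ! (n - f - 1)"
  proof (rule ccontr)
    assume "\<not> x \<ge> P ! (n - f - 1)"
    with dx df have h: "x \<le> P ! f" by (auto split: if_splits)
    have "P ! f \<le> P ! (2*f)" by (rule mono) (use nf in auto)
    with h have "min x (P ! (2*f)) = x" by simp
    with dx df h show False by (auto split: if_splits)
  qed
  from cle[OF _ el] nf cardC_le show ?thesis by simp
qed

lemma dest_le_mid: "(\<forall>j\<in>C. U j t \<le> M) \<Longrightarrow> d \<le> (x + M) / 2"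
proof -
  assume hM: "\<forall>j\<in>C. U j t \<le> M"
  hence xM: "x \<le> M" using iC by auto
  have "{j\<in>C. U j t \<le> M} = C" using hM by auto
  hence "P ! (n - 2*f - 1) \<le> M" using sle[of "n - 2*f - 1" M] nf cardC by simp
  thus ?thesis using df xM by (auto split: if_splits)
qed

lemma dest_ge_mid: "(\<forall>j\<in>C. U j t \<ge> a) \<Longrightarrow> d \<ge> (x + a) / 2"
proof -
  assume ha: "\<forall>j\<in>C. U j t \<ge> a"
  hence xa: "x \<ge> a" using iC by auto
  have "{j\<in>C. U j t \<ge> a} = C" using ha by auto
  hence "P ! (2*f) \<ge> a" using sge[of "2*f" a] nf cardC by simp
  thus ?thesis using df xa by (auto split: if_splits)
qed

lemma dest_lt_bound:
  assumes "d < x" "card {j\<in>C. U j t \<ge> z} < card C - 2*f"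
  shows "d < (x + z) / 2"
proof -
  have el: "x \<ge> P ! (n - f - 1)"
  proof (rule ccontr)
    assume "\<not> x \<ge> P ! (n - f - 1)"
    with assms df have h: "x \<le> P ! f" by (auto split: if_splits)
    have "P ! f \<le> P ! (2*f)" by (rule mono) (use nf in auto)
    with h have "min x (P ! (2*f)) = x" by simp
    with assms df h show False by (auto split: if_splits)
  qed
  have "P ! (n - 2*f - 1) \<le> P ! (n - f - 1)" by (rule mono) (use nf in auto)
  with el have mx: "max x (P ! (n - 2*f - 1)) = x" by simp
  have q1: "P ! (2*f) < z"
  proof (rule ccontr)
    assume "\<not> P ! (2*f) < z"
    hence "card {j\<in>C. U j t \<ge> z} \<ge> card C - 2*f" using cge[of "2*f" z] nf by simp
    thus False using assms by simp
  qed
  show ?thesis using df el mx q1 by (auto split: if_splits)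
qed

lemma dest_top_moves:
  assumes "\<forall>j\<in>C. U j t \<le> x" "x \<ge> z" "card {j\<in>C. U j t \<ge> z} < card C - 2*f"
  shows "d < x"
proof -
  have "{j\<in>C. U j t \<le> x} = C" using assms by auto
  hence el: "P ! (n - f - 1) \<le> x" using sle[of "n - f - 1" x] nf cardC by simp
  have "P ! (n - 2*f - 1) \<le> P ! (n - f - 1)" by (rule mono) (use nf in auto)
  with el have mx: "max x (P ! (n - 2*f - 1)) = x" by simp
  have q1: "P ! (2*f) < z"
  proof (rule ccontr)
    assume "\<not> P ! (2*f) < z"
    hence "card {j\<in>C. U j t \<ge> z} \<ge> card C - 2*f" using cge[of "2*f" z] nf by simp
    thus False using assms by simp
  qed
  show ?thesis using df el mx q1 assms(2) by (auto split: if_splits)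
qed

lemma dest_le_level:
  assumes "x \<le> y" "card {j\<in>C. U j t \<le> y} \<ge> card C - f"
  shows "d \<le> y"
proof -
  have "P ! (n - 2*f - 1) \<le> y" using sle[of "n - 2*f - 1" y] nf cardC assms(2) by simp
  thus ?thesis using df assms(1) by (auto split: if_splits)
qed

end



section \<open>Reflection\<close>

lemma sort_neg:
  fixes xs :: "real list"
  shows "sort (map uminus xs) = rev (map uminus (sort xs))"
proof (rule properties_for_sort)
  show "mset (rev (map uminus (sort xs))) = mset (map uminus xs)"
    by (simp add: mset_map)
  have "sorted_wrt (\<lambda>a b. b \<le> a) (map uminus (sort xs))"
    using sorted_sort[of xs] unfolding sorted_wrt_map
    by (rule sorted_wrt_mono_rel[rotated]) auto
  thus "sorted (rev (map uminus (sort xs)))"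
    by (simp add: sorted_wrt_rev)
qed

lemma snap_neg_nth:
  assumes "q < n"
  shows "snapshot n (\<lambda>j t. - U j t) t ! q = - (snapshot n U t ! (n - 1 - q))"
proof -
  have "snapshot n (\<lambda>j t. - U j t) t = rev (map uminus (snapshot n U t))"
    unfolding snapshot_def using sort_neg[of "map (\<lambda>j. U j t) [0..<n]"]
    by (simp add: comp_def)
  thus ?thesis using assms by (simp add: rev_nth snap_len)
qed

lemma min_minus': "min (- a) (- b) = - max (a::real) b" by (simp add: min_def max_def)
lemma max_minus': "max (- a) (- b) = - min (a::real) b" by (simp add: min_def max_def)

lemma dest_neg:
  assumes "i < n" "4 * f < n"
  shows "destination n f (snapshot n (\<lambda>j t. - U j t) t) (- U i t) = - destination n f (snapshot n U t) (U i t)"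
proof -
  let ?P = "snapshot n U t" and ?P' = "snapshot n (\<lambda>j t. - U j t) t"
  have xP: "U i t \<in> set ?P" using assms by (auto simp: snapshot_def)
  have xP': "- U i t \<in> set ?P'" using assms by (auto simp: snapshot_def)
  have e1: "?P' ! f = - (?P ! (n - f - 1))" using snap_neg_nth[of f n U t] assms by simp
  have e2: "?P' ! (n - f - 1) = - (?P ! f)" using snap_neg_nth[of "n - f - 1" n U t] assms
    by (simp add: diff_diff_left)
  have e3: "?P' ! (2*f) = - (?P ! (n - 2*f - 1))" using snap_neg_nth[of "2*f" n U t] assms by simp
  have e4: "?P' ! (n - 2*f - 1) = - (?P ! (2*f))" using snap_neg_nth[of "n - 2*f - 1" n U t] assms
    by (simp add: diff_diff_left)
  show ?thesis
    unfolding dest_formula[OF snap_sorted snap_len xP assms(2)] dest_formula[OF snap_sorted snap_len xP' assms(2)]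
      e1 e2 e3 e4 min_minus' max_minus'
    by (auto simp: field_simps)
qed

lemma between_neg: "between (-a) (-b) (-y) = between a b y"
  by (auto simp: between_def min_def max_def)

lemma cont_neg_iff: "continuous_on S (\<lambda>x. - g x) \<longleftrightarrow> continuous_on S (g :: real \<Rightarrow> real)"
  using continuous_on_minus[of S g] continuous_on_minus[of S "\<lambda>x. - g x"] by auto

lemma correct_neg:
  assumes "correct_robot n f U i \<delta> tL tMs tMe" "i < n" "4 * f < n"
  shows "correct_robot n f (\<lambda>j t. - U j t) i \<delta> tL tMs tMe"
proof -
  define D where "D k = destination n f (snapshot n U (tL k)) (U i (tL k))" for k
  have dn: "\<And>t. destination n f (snapshot n (\<lambda>j t. - U j t) t) (- U i t) = - destination n f (snapshot n U t) (U i t)"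
    using dest_neg[OF assms(2,3)] by simp
  note A = assms(1)[unfolded correct_robot_def Let_def]
  have a1: "\<delta> > 0" using A by (elim conjE)
  have a2: "0 \<le> tL 0" using A by (elim conjE)
  have a3: "\<forall>k. tL k \<le> tMs k \<and> tMs k \<le> tMe k \<and> tMe k \<le> tL (Suc k)" using A by (elim conjE)
  have a4: "filterlim tL at_top sequentially" using A by (elim conjE)
  have a5: "\<forall>t\<in>{0..tMs 0}. U i t = U i 0" using A by (elim conjE)
  have a6: "\<forall>k. \<forall>t\<in>{tMe k..tMs (Suc k)}. U i t = U i (tMe k)" using A by (elim conjE)
  have a7: "\<forall>k. continuous_on {tMs k..tMe k} (U i) \<and>
     (\<forall>s s'. tMs k \<le> s \<and> s \<le> s' \<and> s' \<le> tMe k \<longrightarrow> between (U i s) (D k) (U i s')) \<and>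
     \<bar>U i (tMe k) - U i (tL k)\<bar> \<ge> min \<delta> \<bar>D k - U i (tL k)\<bar>"
    using A unfolding D_def by (elim conjE)
  show ?thesis
    unfolding correct_robot_def Let_def dn
  proof (intro conjI)
    show "\<delta> > 0" "0 \<le> tL 0" "\<forall>k. tL k \<le> tMs k \<and> tMs k \<le> tMe k \<and> tMe k \<le> tL (Suc k)"
      "filterlim tL at_top sequentially" by (fact a1 a2 a3 a4)+
    show "\<forall>t\<in>{0..tMs 0}. - U i t = - U i 0"
    proof (rule ballI)
      fix t assume t: "t \<in> {0..tMs 0}"
      have "U i t = U i 0" using a5 t by (rule bspec)
      thus "- U i t = - U i 0" by (rule arg_cong)
    qed
    show "\<forall>k. \<forall>t\<in>{tMe k..tMs (Suc k)}. - U i t = - U i (tMe k)"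
    proof (intro allI ballI)
      fix k t assume t: "t \<in> {tMe k..tMs (Suc k)}"
      have "U i t = U i (tMe k)" using spec[OF a6, of k] t by (rule bspec)
      thus "- U i t = - U i (tMe k)" by (rule arg_cong)
    qed
    show "\<forall>k. continuous_on {tMs k..tMe k} (\<lambda>t. - U i t) \<and>
     (\<forall>s s'. tMs k \<le> s \<and> s \<le> s' \<and> s' \<le> tMe k \<longrightarrow>
        between (- U i s) (- destination n f (snapshot n U (tL k)) (U i (tL k))) (- U i s')) \<and>
     min \<delta> \<bar>- destination n f (snapshot n U (tL k)) (U i (tL k)) - - U i (tL k)\<bar> \<le> \<bar>- U i (tMe k) - - U i (tL k)\<bar>"
    proof (rule allI, intro conjI)
      fix k
      have h1: "continuous_on {tMs k..tMe k} (U i)" using spec[OF a7, of k] by (elim conjE)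
      have h2: "\<forall>s s'. tMs k \<le> s \<and> s \<le> s' \<and> s' \<le> tMe k \<longrightarrow> between (U i s) (D k) (U i s')"
        using spec[OF a7, of k] by (elim conjE)
      have h3: "\<bar>U i (tMe k) - U i (tL k)\<bar> \<ge> min \<delta> \<bar>D k - U i (tL k)\<bar>"
        using spec[OF a7, of k] by (elim conjE)
      show "continuous_on {tMs k..tMe k} (\<lambda>t. - U i t)" using h1 by (rule continuous_on_minus)
      show "\<forall>s s'. tMs k \<le> s \<and> s \<le> s' \<and> s' \<le> tMe k \<longrightarrow>
        between (- U i s) (- destination n f (snapshot n U (tL k)) (U i (tL k))) (- U i s')"
        using h2 unfolding between_neg D_def .
      have e1: "\<bar>- D k - - U i (tL k)\<bar> = \<bar>D k - U i (tL k)\<bar>" by linarith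
      have e2: "\<bar>- U i (tMe k) - - U i (tL k)\<bar> = \<bar>U i (tMe k) - U i (tL k)\<bar>" by linarith
      show "min \<delta> \<bar>- destination n f (snapshot n U (tL k)) (U i (tL k)) - - U i (tL k)\<bar> \<le> \<bar>- U i (tMe k) - - U i (tL k)\<bar>"
      proof -
        have "min \<delta> \<bar>- D k - - U i (tL k)\<bar> \<le> \<bar>- U i (tMe k) - - U i (tL k)\<bar>"
          unfolding e1 e2 by (rule h3)
        thus ?thesis unfolding D_def .
      qed
    qed
  qed
qed

locale rob =
  fixes n f :: nat and C :: "nat set" and U :: "nat \<Rightarrow> real \<Rightarrow> real" and \<delta> :: "nat \<Rightarrow> real"
    and tL tMs tMe :: "nat \<Rightarrow> nat \<Rightarrow> real"
  assumes f1: "f \<ge> 1" and nf: "n \<ge> 5 * f + 1" and Csub: "C \<subseteq> {..<n}" and cardC: "card C \<ge> n - f"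
    and cor: "\<forall>i\<in>C. correct_robot n f U i (\<delta> i) (tL i) (tMs i) (tMe i)"
begin

abbreviation "xk i k \<equiv> U i (tL i k)"
abbreviation "dk i k \<equiv> destination n f (snapshot n U (tL i k)) (U i (tL i k))"

lemma nf4: "4 * f < n" using nf by simp

lemma finC: "finite C" using Csub finite_subset by blast

lemma rob_neg: "rob n f C (\<lambda>j t. - U j t) \<delta> tL tMs tMe"
  using f1 nf Csub cardC cor correct_neg nf4 by unfold_locales auto

context
  fixes i assumes iC: "i \<in> C"
begin

lemma cr: "correct_robot n f U i (\<delta> i) (tL i) (tMs i) (tMe i)" using cor iC by auto

lemma dpos: "\<delta> i > 0" using cr by (simp add: correct_robot_def)

lemma tL0: "tL i 0 \<ge> 0" using cr by (simp add: correct_robot_def)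

lemma phases: "tL i k \<le> tMs i k" "tMs i k \<le> tMe i k" "tMe i k \<le> tL i (Suc k)"
  using cr by (auto simp: correct_robot_def)

lemma tL_step: "tL i k \<le> tL i (Suc k)" using phases[of k] by linarith

lemma tL_mono: "k \<le> k' \<Longrightarrow> tL i k \<le> tL i k'"
  using lift_Suc_mono_le[of "tL i", OF tL_step] by blast

lemma tL_unb: "\<exists>k. tL i k > T"
proof -
  have "filterlim (tL i) at_top sequentially" using cr by (simp add: correct_robot_def)
  hence "eventually (\<lambda>k. T < tL i k) sequentially" by (simp add: filterlim_at_top_dense)
  thus ?thesis by (auto simp: eventually_sequentially)
qed

lemma crH: "\<forall>k. continuous_on {tMs i k..tMe i k} (U i) \<and>
    (\<forall>s s'. tMs i k \<le> s \<and> s \<le> s' \<and> s' \<le> tMe i k \<longrightarrow> between (U i s) (dk i k) (U i s')) \<and>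
    \<bar>U i (tMe i k) - xk i k\<bar> \<ge> min (\<delta> i) \<bar>dk i k - xk i k\<bar>"
  using cr unfolding correct_robot_def Let_def by (elim conjE) assumption

lemma const0: "t \<in> {0..tMs i 0} \<Longrightarrow> U i t = U i 0"
proof -
  have "\<forall>t\<in>{0..tMs i 0}. U i t = U i 0"
    using cr unfolding correct_robot_def by (elim conjE) assumption
  thus "t \<in> {0..tMs i 0} \<Longrightarrow> U i t = U i 0" by blast
qed

lemma constk: "t \<in> {tMe i k..tMs i (Suc k)} \<Longrightarrow> U i t = U i (tMe i k)"
proof -
  have "\<forall>k. \<forall>t\<in>{tMe i k..tMs i (Suc k)}. U i t = U i (tMe i k)"
    using cr unfolding correct_robot_def by (elim conjE) assumption
  thus "t \<in> {tMe i k..tMs i (Suc k)} \<Longrightarrow> U i t = U i (tMe i k)" by blast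
qed

lemma movek: "continuous_on {tMs i k..tMe i k} (U i)"
  "\<And>s s'. tMs i k \<le> s \<Longrightarrow> s \<le> s' \<Longrightarrow> s' \<le> tMe i k \<Longrightarrow> between (U i s) (dk i k) (U i s')"
  "\<bar>U i (tMe i k) - xk i k\<bar> \<ge> min (\<delta> i) \<bar>dk i k - xk i k\<bar>"
proof -
  have h: "continuous_on {tMs i k..tMe i k} (U i) \<and>
    (\<forall>s s'. tMs i k \<le> s \<and> s \<le> s' \<and> s' \<le> tMe i k \<longrightarrow> between (U i s) (dk i k) (U i s')) \<and>
    \<bar>U i (tMe i k) - xk i k\<bar> \<ge> min (\<delta> i) \<bar>dk i k - xk i k\<bar>"
    using crH by (rule spec)
  show "continuous_on {tMs i k..tMe i k} (U i)" using h by (rule conjunct1)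
  show "\<bar>U i (tMe i k) - xk i k\<bar> \<ge> min (\<delta> i) \<bar>dk i k - xk i k\<bar>" using h by (elim conjE)
  fix s s' assume "tMs i k \<le> s" "s \<le> s'" "s' \<le> tMe i k"
  thus "between (U i s) (dk i k) (U i s')" using h by (elim conjE) simp
qed

lemma pos0: "0 \<le> t \<Longrightarrow> t \<le> tL i 0 \<Longrightarrow> U i t = U i 0"
proof -
  assume "0 \<le> t" "t \<le> tL i 0"
  moreover have "tL i 0 \<le> tMs i 0" by (rule phases(1))
  ultimately show ?thesis by (intro const0) simp
qed

lemma clamp:
  assumes "tL i k \<le> s" "s \<le> tL i (Suc k)"
  shows "U i s = U i (max (tMs i k) (min s (tMe i k)))"
proof (cases "s \<le> tMs i k")
  case True
  have p1: "tMs i k \<le> tMe i k" by (rule phases(2))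
  hence c: "max (tMs i k) (min s (tMe i k)) = tMs i k" using True by linarith
  show ?thesis
  proof (cases k)
    case 0
    have "s \<ge> 0" using assms(1) tL0 0 by simp
    hence "U i s = U i 0" "U i (tMs i 0) = U i 0" using const0[of s] const0[of "tMs i 0"] True 0 p1
      by auto
    thus ?thesis using c 0 by simp
  next
    case (Suc k')
    have a: "tMe i k' \<le> tL i k" using phases(3)[of k'] Suc by simp
    have b: "tL i k \<le> tMs i k" by (rule phases(1))
    have "U i s = U i (tMe i k')" using constk[of s k'] a assms(1) True Suc by simp
    moreover have "U i (tMs i k) = U i (tMe i k')" using constk[of "tMs i k" k'] a b Suc by simp
    ultimately show ?thesis using c by simp
  qed
next
  case False
  show ?thesis
  proof (cases "s \<le> tMe i k")
    case True
    hence "max (tMs i k) (min s (tMe i k)) = s" using False by linarith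
    thus ?thesis by simp
  next
    case F2: False
    hence c: "max (tMs i k) (min s (tMe i k)) = tMe i k" using phases(2)[of k] by linarith
    have "s \<le> tMs i (Suc k)" using assms(2) phases(1)[of "Suc k"] by linarith
    hence "U i s = U i (tMe i k)" using constk[of s k] F2 by simp
    thus ?thesis using c by simp
  qed
qed

lemma seg:
  assumes "tL i k \<le> s" "s \<le> s'" "s' \<le> tL i (Suc k)"
  shows "between (U i s) (dk i k) (U i s')"
proof -
  let ?c = "\<lambda>s. max (tMs i k) (min s (tMe i k))"
  have "U i s = U i (?c s)" "U i s' = U i (?c s')" using clamp assms by auto
  moreover have "between (U i (?c s)) (dk i k) (U i (?c s'))"
    by (rule movek(2)) (use assms phases[of k] in auto)
  ultimately show ?thesis by simp
qed

lemma seg0: "tL i k \<le> t \<Longrightarrow> t \<le> tL i (Suc k) \<Longrightarrow> between (xk i k) (dk i k) (U i t)"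
  using seg[of k "tL i k" t] by auto

lemma xnext: "between (xk i k) (dk i k) (xk i (Suc k))"
  using seg0[of k "tL i (Suc k)"] phases[of k] by auto

lemma move: "\<bar>xk i (Suc k) - xk i k\<bar> \<ge> min (\<delta> i) \<bar>dk i k - xk i k\<bar>"
proof -
  have "U i (tL i (Suc k)) = U i (tMe i k)"
    using constk[of "tL i (Suc k)" k] phases[of k] phases[of "Suc k"] by auto
  thus ?thesis using movek(3)[of k] by simp
qed

lemma cur:
  assumes "tL i K \<le> t"
  shows "\<exists>k\<ge>K. tL i k \<le> t \<and> t < tL i (Suc k)"
proof -
  obtain N where N: "tL i N > t" using tL_unb by blast
  have "tL i N \<le> tL i (Suc (max K N))" by (rule tL_mono) simp
  hence ex: "\<exists>k. K \<le> k \<and> t < tL i (Suc k)"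
    using N by (intro exI[of _ "max K N"]) auto
  define k where "k = (LEAST k. K \<le> k \<and> t < tL i (Suc k))"
  have k1: "K \<le> k" "t < tL i (Suc k)" using LeastI_ex[OF ex] k_def by auto
  have "tL i k \<le> t"
  proof (cases "k = K")
    case True thus ?thesis using assms by simp
  next
    case False
    hence "K \<le> k - 1" "k - 1 < k" using k1 by auto
    hence "\<not> t < tL i (Suc (k - 1))" using not_less_Least[of "k - 1" "\<lambda>k. K \<le> k \<and> t < tL i (Suc k)"] k_def by blast
    thus ?thesis using \<open>K \<le> k - 1\<close> \<open>k - 1 < k\<close> by (simp add: not_less)
  qed
  thus ?thesis using k1 by blast
qed

lemma last_before:
  assumes "t0 \<le> tL i k0" "tL i k0 < t"
  shows "\<exists>k\<ge>k0. tL i k < t \<and> t \<le> tL i (Suc k)"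
proof -
  obtain N where N: "tL i N > t" using tL_unb by blast
  have "finite {k. tL i k < t}"
  proof (rule finite_subset[of _ "{..<N}"])
    show "{k. tL i k < t} \<subseteq> {..<N}"
    proof
      fix k assume k: "k \<in> {k. tL i k < t}"
      show "k \<in> {..<N}"
      proof (rule ccontr)
        assume "k \<notin> {..<N}"
        hence "N \<le> k" by simp
        hence "tL i N \<le> tL i k" by (rule tL_mono)
        thus False using N k by simp
      qed
    qed
  qed auto
  define k where "k = Max {k. tL i k < t}"
  have kin: "tL i k < t" using Max_in[OF \<open>finite _\<close>] assms k_def by auto
  have "k0 \<le> k" using Max_ge[OF \<open>finite _\<close>, of k0] assms k_def by auto
  moreover have "t \<le> tL i (Suc k)"
    using Max_ge[OF \<open>finite _\<close>, of "Suc k"] k_def by (auto simp: not_less[symmetric])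
  ultimately show ?thesis using kin by blast
qed

end

end



context rob begin

lemma seg_le: "i \<in> C \<Longrightarrow> tL i k \<le> t \<Longrightarrow> t \<le> tL i (Suc k) \<Longrightarrow> U i t \<le> max (xk i k) (dk i k)"
  using seg0[of i k t] by (simp add: between_def)

lemma seg_ge: "i \<in> C \<Longrightarrow> tL i k \<le> t \<Longrightarrow> t \<le> tL i (Suc k) \<Longrightarrow> U i t \<ge> min (xk i k) (dk i k)"
  using seg0[of i k t] by (simp add: between_def)

lemma inv_le:
  fixes S :: "nat set" and t0 y :: real
  assumes SC: "S \<subseteq> C"
    and H0: "\<And>j t. j \<in> S \<Longrightarrow> t0 \<le> t \<Longrightarrow> (\<forall>k. tL j k < t \<longrightarrow> tL j k < t0) \<Longrightarrow> U j t \<le> y"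
    and H1: "\<And>i k. i \<in> S \<Longrightarrow> t0 \<le> tL i k \<Longrightarrow> (\<forall>j\<in>S. U j (tL i k) \<le> y) \<Longrightarrow> dk i k \<le> y"
  shows "\<forall>j\<in>S. \<forall>t\<ge>t0. U j t \<le> y"
proof -
  define good where "good i k \<longleftrightarrow> xk i k \<le> y \<and> dk i k \<le> y" for i k
  have G0: "U j t \<le> y" if j: "j \<in> S" "t0 \<le> t" and allg: "\<forall>k. t0 \<le> tL j k \<and> tL j k < t \<longrightarrow> good j k" for j t
  proof (cases "\<forall>k. tL j k < t \<longrightarrow> tL j k < t0")
    case True thus ?thesis using H0 j by blast
  next
    case False
    then obtain k0 where k0: "tL j k0 < t" "t0 \<le> tL j k0" by (auto simp: not_less)
    have jC: "j \<in> C" using j SC by auto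
    obtain k where k: "k \<ge> k0" "tL j k < t" "t \<le> tL j (Suc k)" using last_before[OF jC k0(2) k0(1)] by blast
    have "tL j k0 \<le> tL j k" using tL_mono[OF jC k(1)] .
    hence "t0 \<le> tL j k" using k0(2) by linarith
    hence g: "good j k" using allg k(2) by blast
    have "U j t \<le> max (xk j k) (dk j k)" using seg_le[OF jC, of k t] k by simp
    moreover have "max (xk j k) (dk j k) \<le> y" using g unfolding good_def by simp
    ultimately show ?thesis by (rule order_trans)
  qed
  have nobad: "\<forall>i\<in>S. \<forall>k. t0 \<le> tL i k \<longrightarrow> good i k"
  proof (rule ccontr)
    assume nb: "\<not> (\<forall>i\<in>S. \<forall>k. t0 \<le> tL i k \<longrightarrow> good i k)"
    define S' where "S' = {i\<in>S. \<exists>k. t0 \<le> tL i k \<and> \<not> good i k}"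
    have S'ne: "S' \<noteq> {}" using nb S'_def by auto
    have "S' \<subseteq> C" using SC S'_def by auto
    hence finS': "finite S'" using finC finite_subset by blast
    define km where "km i = (LEAST k. t0 \<le> tL i k \<and> \<not> good i k)" for i
    have km: "t0 \<le> tL i (km i) \<and> \<not> good i (km i)" if "i \<in> S'" for i
    proof -
      have "\<exists>k. t0 \<le> tL i k \<and> \<not> good i k" using that S'_def by auto
      thus ?thesis unfolding km_def by (rule LeastI_ex)
    qed
    have kmle: "km i \<le> k" if "t0 \<le> tL i k" "\<not> good i k" for i k
      unfolding km_def using that by (intro Least_le) auto
    define \<tau> where "\<tau> = Min ((\<lambda>i. tL i (km i)) ` S')"
    have "\<tau> \<in> (\<lambda>i. tL i (km i)) ` S'" unfolding \<tau>_def using finS' S'ne by (intro Min_in) auto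
    then obtain i0 where i0: "i0 \<in> S'" "tL i0 (km i0) = \<tau>" by auto
    have \<tau>le: "\<tau> \<le> tL i (km i)" if "i \<in> S'" for i using Min_le finS' that \<tau>_def by auto
    have i0S: "i0 \<in> S" using i0 S'_def by auto
    have t0\<tau>: "t0 \<le> \<tau>" using km[OF i0(1)] i0(2) by simp
    have allpos: "\<forall>j\<in>S. U j \<tau> \<le> y"
    proof
      fix j assume jS: "j \<in> S"
      show "U j \<tau> \<le> y"
      proof (rule G0[OF jS t0\<tau>])
        show "\<forall>k. t0 \<le> tL j k \<and> tL j k < \<tau> \<longrightarrow> good j k"
        proof (intro allI impI)
          fix k assume kk: "t0 \<le> tL j k \<and> tL j k < \<tau>"
          show "good j k"
          proof (rule ccontr)
            assume ng: "\<not> good j k"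
            hence jS': "j \<in> S'" using S'_def jS kk by auto
            have "km j \<le> k" using kmle kk ng by auto
            hence "tL j (km j) \<le> tL j k" using tL_mono jS SC by auto
            moreover have "\<tau> \<le> tL j (km j)" using \<tau>le jS' by auto
            ultimately show False using kk by linarith
          qed
        qed
      qed
    qed
    have "dk i0 (km i0) \<le> y" using H1[OF i0S, of "km i0"] km[OF i0(1)] allpos i0(2) by simp
    moreover have "xk i0 (km i0) \<le> y" using allpos i0S i0(2) by auto
    ultimately have "good i0 (km i0)" unfolding good_def by simp
    thus False using km[OF i0(1)] by simp
  qed
  show ?thesis using G0 nobad by blast
qed

lemma inv_ge:
  fixes S :: "nat set" and t0 y :: real
  assumes SC: "S \<subseteq> C"
    and H0: "\<And>j t. j \<in> S \<Longrightarrow> t0 \<le> t \<Longrightarrow> (\<forall>k. tL j k < t \<longrightarrow> tL j k < t0) \<Longrightarrow> U j t \<ge> y"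
    and H1: "\<And>i k. i \<in> S \<Longrightarrow> t0 \<le> tL i k \<Longrightarrow> (\<forall>j\<in>S. U j (tL i k) \<ge> y) \<Longrightarrow> dk i k \<ge> y"
  shows "\<forall>j\<in>S. \<forall>t\<ge>t0. U j t \<ge> y"
proof -
  have "\<forall>j\<in>S. \<forall>t\<ge>t0. - U j t \<le> - y"
  proof (rule rob.inv_le[OF rob_neg SC])
    fix j t assume "j \<in> S" "t0 \<le> t" "\<forall>k. tL j k < t \<longrightarrow> tL j k < t0"
    thus "- U j t \<le> - y" using H0 by simp
  next
    fix i k assume iS: "i \<in> S" and tk: "t0 \<le> tL i k" and al: "\<forall>j\<in>S. - U j (tL i k) \<le> - y"
    have "i < n" using iS SC Csub by auto
    hence e: "destination n f (snapshot n (\<lambda>j t. - U j t) (tL i k)) (- U i (tL i k)) = - dk i k"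
      using dest_neg nf4 by blast
    have "dk i k \<ge> y" using H1[OF iS tk] al by simp
    thus "destination n f (snapshot n (\<lambda>j t. - U j t) (tL i k)) (- U i (tL i k)) \<le> - y"
      unfolding e by simp
  qed
  thus ?thesis by simp
qed

end



context rob begin

lemma Cne: "C \<noteq> {}"
  using cardC nf by auto

lemma top_recurrent:
  fixes A \<eta> \<theta> \<xi> T' :: real
  assumes up: "\<forall>t\<ge>T'. \<forall>j\<in>C. U j t \<le> A + \<eta>"
    and ls: "\<forall>t. \<exists>s\<ge>t. \<exists>j\<in>C. U j s > A - \<theta>"
    and c1: "(A - \<xi>) + (A + \<eta>) \<le> 2 * (A - \<theta>)"
    and c2: "\<forall>i\<in>C. A + \<eta> - min (\<delta> i) ((\<xi> - \<theta>) / 2) \<le> A - \<theta>"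
    and c3: "\<theta> \<le> \<xi>"
  shows "\<exists>\<tau>\<ge>T'. card {j\<in>C. U j \<tau> \<ge> A - \<xi>} \<ge> card C - 2*f"
proof (rule ccontr)
  assume "\<not> ?thesis"
  hence NE: "\<And>\<tau>. \<tau> \<ge> T' \<Longrightarrow> card {j\<in>C. U j \<tau> \<ge> A - \<xi>} < card C - 2*f" by (meson not_le)
  define z where "z = A - \<xi>"
  define Z where "Z = A - \<theta>"
  have NEz: "\<And>\<tau>. \<tau> \<ge> T' \<Longrightarrow> card {j\<in>C. U j \<tau> \<ge> z} < card C - 2*f" using NE unfolding z_def .
  have zZ: "z \<le> Z" using c3 z_def Z_def by simp
  have fa: "xk i k < z" if iC: "i \<in> C" and lk: "T' \<le> tL i k" and dx: "dk i k > xk i k" for i k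
  proof (rule ccontr)
    assume "\<not> xk i k < z"
    hence "{j\<in>C. U j (tL i k) \<ge> xk i k} \<subseteq> {j\<in>C. U j (tL i k) \<ge> z}" by auto
    hence "card {j\<in>C. U j (tL i k) \<ge> xk i k} \<le> card {j\<in>C. U j (tL i k) \<ge> z}"
      using finC by (intro card_mono) auto
    moreover have "card {j\<in>C. U j (tL i k) \<ge> xk i k} \<ge> card C - f"
      using dest_gt_count[OF Csub cardC nf4 iC dx] .
    ultimately show False using NEz[OF lk] by linarith
  qed
  have fb: "dk i k \<le> Z" if iC: "i \<in> C" and lk: "T' \<le> tL i k" and dx: "dk i k > xk i k" for i k
  proof -
    have "\<forall>j\<in>C. U j (tL i k) \<le> A + \<eta>" using up lk by auto
    hence "dk i k \<le> (xk i k + (A + \<eta>)) / 2" using dest_le_mid[OF Csub cardC nf4 iC] by blast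
    moreover have "(xk i k + (A + \<eta>)) / 2 < (z + (A + \<eta>)) / 2" using fa[OF iC lk dx] by simp
    moreover have "(z + (A + \<eta>)) / 2 \<le> Z" using c1 unfolding z_def Z_def by simp
    ultimately show ?thesis by linarith
  qed
  have fc: "dk i k < (xk i k + z) / 2" if iC: "i \<in> C" and lk: "T' \<le> tL i k" and dx: "dk i k < xk i k" for i k
    using dest_lt_bound[OF Csub cardC nf4 iC dx] NEz[OF lk] by simp
  have fd: "dk i k < xk i k" if iC: "i \<in> C" and lk: "T' \<le> tL i k"
    and al: "\<forall>j\<in>C. U j (tL i k) \<le> xk i k" and xz: "xk i k \<ge> z" for i k
    using dest_top_moves[where U=U and t="tL i k" and z=z, OF Csub cardC nf4 iC al] xz NEz[OF lk] by simp
  have fP: "dk i k \<le> Z" if iC: "i \<in> C" and lk: "T' \<le> tL i k" and xZ: "xk i k \<le> Z" for i k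
  proof (cases "dk i k > xk i k")
    case True thus ?thesis using fb[OF iC lk] by simp
  next
    case False thus ?thesis using xZ by simp
  qed
  have fdrop: "xk i (Suc k) \<le> Z" if iC: "i \<in> C" and lk: "T' \<le> tL i k" and dx: "dk i k < xk i k" for i k
  proof -
    have b: "between (xk i k) (dk i k) (xk i (Suc k))" by (rule xnext[OF iC])
    hence x1: "xk i (Suc k) \<le> xk i k" "xk i (Suc k) \<ge> dk i k" using dx by (auto simp: between_def)
    have mv: "\<bar>xk i (Suc k) - xk i k\<bar> \<ge> min (\<delta> i) \<bar>dk i k - xk i k\<bar>" by (rule move[OF iC])
    hence mv': "xk i k - xk i (Suc k) \<ge> min (\<delta> i) (xk i k - dk i k)" using x1 dx by simp
    show ?thesis
    proof (cases "xk i k \<le> Z")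
      case True thus ?thesis using x1 by simp
    next
      case False
      have "xk i k - dk i k > (xk i k - z) / 2" using fc[OF iC lk dx] by simp
      moreover have "(xk i k - z) / 2 \<ge> (\<xi> - \<theta>) / 2" using False z_def Z_def by simp
      ultimately have "xk i k - dk i k \<ge> (\<xi> - \<theta>) / 2" by simp
      hence "min (\<delta> i) (xk i k - dk i k) \<ge> min (\<delta> i) ((\<xi> - \<theta>) / 2)" by (simp add: min_def)
      moreover have "xk i k \<le> A + \<eta>" using up lk iC by auto
      ultimately show ?thesis using mv' c2 iC Z_def by force
    qed
  qed
  have lowpers: "xk i k \<le> Z" if iC: "i \<in> C" and lK: "T' \<le> tL i K" and xK: "xk i K \<le> Z" and Kk: "K \<le> k" for i K k
    using Kk
  proof (induction k rule: dec_induct)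
    case base thus ?case using xK .
  next
    case (step k)
    have lk: "T' \<le> tL i k" using tL_mono[OF iC step(1)] lK by linarith
    have "dk i k \<le> Z" using fP[OF iC lk step(3)] .
    moreover have "between (xk i k) (dk i k) (xk i (Suc k))" by (rule xnext[OF iC])
    ultimately show ?case using step(3) by (auto simp: between_def)
  qed
  have lowpos: "U i t \<le> Z" if iC: "i \<in> C" and lK: "T' \<le> tL i K" and xK: "xk i K \<le> Z" and tt: "tL i K \<le> t" for i K t
  proof -
    obtain k where k: "k \<ge> K" "tL i k \<le> t" "t < tL i (Suc k)" using cur[OF iC tt] by blast
    have lk: "T' \<le> tL i k" using tL_mono[OF iC k(1)] lK by linarith
    have xk: "xk i k \<le> Z" using lowpers[OF iC lK xK k(1)] .
    have "dk i k \<le> Z" using fP[OF iC lk xk] .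
    moreover have "U i t \<le> max (xk i k) (dk i k)" using seg_le[OF iC k(2)] k(3) by simp
    ultimately show ?thesis using xk by simp
  qed
  have highd: "dk i k = xk i k" if iC: "i \<in> C" and hi: "\<forall>k. T' \<le> tL i k \<longrightarrow> Z < xk i k" and lk: "T' \<le> tL i k" for i k
  proof (rule ccontr)
    assume ne: "dk i k \<noteq> xk i k"
    show False
    proof (cases "dk i k > xk i k")
      case True
      thus False using fa[OF iC lk True] hi lk zZ by force
    next
      case False
      hence "dk i k < xk i k" using ne by simp
      hence "xk i (Suc k) \<le> Z" using fdrop[OF iC lk] by simp
      moreover have "T' \<le> tL i (Suc k)" using tL_mono[OF iC, of k "Suc k"] lk by simp
      ultimately show False using hi by force
    qed
  qed
  have highx: "xk i k = xk i K" if iC: "i \<in> C" and hi: "\<forall>k. T' \<le> tL i k \<longrightarrow> Z < xk i k" and lK: "T' \<le> tL i K" and Kk: "K \<le> k" for i K k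
    using Kk
  proof (induction k rule: dec_induct)
    case base thus ?case by simp
  next
    case (step k)
    have lk: "T' \<le> tL i k" using tL_mono[OF iC step(1)] lK by linarith
    have "dk i k = xk i k" using highd[OF iC hi lk] .
    moreover have "between (xk i k) (dk i k) (xk i (Suc k))" by (rule xnext[OF iC])
    ultimately show ?case using step(3) by (auto simp: between_def)
  qed
  have highpos: "U i t = xk i K" if iC: "i \<in> C" and hi: "\<forall>k. T' \<le> tL i k \<longrightarrow> Z < xk i k" and lK: "T' \<le> tL i K" and tt: "tL i K \<le> t" for i K t
  proof -
    obtain k where k: "k \<ge> K" "tL i k \<le> t" "t < tL i (Suc k)" using cur[OF iC tt] by blast
    have lk: "T' \<le> tL i k" using tL_mono[OF iC k(1)] lK by linarith
    have "dk i k = xk i k" using highd[OF iC hi lk] .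
    moreover have "between (xk i k) (dk i k) (U i t)" using seg0[OF iC k(2)] k(3) by simp
    ultimately have "U i t = xk i k" by (auto simp: between_def)
    thus ?thesis using highx[OF iC hi lK k(1)] by simp
  qed
  define Lo where "Lo = {i\<in>C. \<exists>k. T' \<le> tL i k \<and> xk i k \<le> Z}"
  have "\<forall>i\<in>C. \<exists>k. T' \<le> tL i k \<and> (i \<in> Lo \<longrightarrow> xk i k \<le> Z)"
  proof
    fix i assume iC: "i \<in> C"
    show "\<exists>k. T' \<le> tL i k \<and> (i \<in> Lo \<longrightarrow> xk i k \<le> Z)"
    proof (cases "i \<in> Lo")
      case True thus ?thesis using Lo_def by auto
    next
      case False
      obtain k where "tL i k > T'" using tL_unb[OF iC] by blast
      thus ?thesis using False by (intro exI[of _ k]) auto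
    qed
  qed
  then obtain kf where kf: "\<forall>i\<in>C. T' \<le> tL i (kf i) \<and> (i \<in> Lo \<longrightarrow> xk i (kf i) \<le> Z)"
    by metis
  have hiall: "\<forall>k. T' \<le> tL i k \<longrightarrow> Z < xk i k" if "i \<in> C" "i \<notin> Lo" for i
  proof (intro allI impI)
    fix k assume lk: "T' \<le> tL i k"
    show "Z < xk i k"
    proof (rule ccontr)
      assume "\<not> Z < xk i k"
      hence "xk i k \<le> Z" by simp
      hence "i \<in> Lo" using that(1) lk unfolding Lo_def by blast
      thus False using that(2) by simp
    qed
  qed
  define T2 where "T2 = Max ((\<lambda>i. tL i (kf i)) ` C)"
  have T2ge: "tL i (kf i) \<le> T2" if "i \<in> C" for i
    unfolding T2_def using finC that by (intro Max_ge) auto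
  have posLo: "U i t \<le> Z" if "i \<in> Lo" "T2 \<le> t" for i t
  proof -
    have iC: "i \<in> C" using that Lo_def by auto
    show ?thesis using lowpos[OF iC _ _ order_trans[OF T2ge[OF iC] that(2)]] kf iC that(1) by blast
  qed
  show False
  proof (cases "C \<subseteq> Lo")
    case True
    obtain s j where s: "s \<ge> T2" "j \<in> C" "U j s > A - \<theta>" using ls by blast
    have "U j s \<le> Z" using posLo[of j s] True s by auto
    thus False using s Z_def by simp
  next
    case False
    define Hi where "Hi = C - Lo"
    have Hine: "Hi \<noteq> {}" using False Hi_def by auto
    have finHi: "finite Hi" using finC Hi_def by auto
    define p where "p i = xk i (kf i)" for i
    have posHi: "U i t = p i" if "i \<in> Hi" "T2 \<le> t" for i t
    proof -
      have iC: "i \<in> C" and iL: "i \<notin> Lo" using that Hi_def by auto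
      show ?thesis unfolding p_def
        using highpos[OF iC hiall[OF iC iL] _ order_trans[OF T2ge[OF iC] that(2)]] kf iC by blast
    qed
    have pZ: "p i > Z" if "i \<in> Hi" for i
    proof -
      have iC: "i \<in> C" and iL: "i \<notin> Lo" using that Hi_def by auto
      show ?thesis unfolding p_def using hiall[OF iC iL] kf iC by blast
    qed
    have "Max (p ` Hi) \<in> p ` Hi" using finHi Hine by (intro Max_in) auto
    then obtain i0 where i0: "i0 \<in> Hi" "p i0 = Max (p ` Hi)" by auto
    have pmax: "p j \<le> p i0" if "j \<in> Hi" for j using i0(2) finHi that by (simp add: Max_ge)
    have i0C: "i0 \<in> C" and i0L: "i0 \<notin> Lo" using i0 Hi_def by auto
    obtain k where k: "tL i0 k > T2" using tL_unb[OF i0C] by blast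
    have lk: "T' \<le> tL i0 k" using T2ge[OF i0C] kf i0C k by force
    have x0: "xk i0 k = p i0" using posHi[OF i0(1)] k by simp
    have al: "\<forall>j\<in>C. U j (tL i0 k) \<le> xk i0 k"
    proof
      fix j assume jC: "j \<in> C"
      show "U j (tL i0 k) \<le> xk i0 k"
      proof (cases "j \<in> Lo")
        case True
        have "U j (tL i0 k) \<le> Z" using posLo[OF True, of "tL i0 k"] k by simp
        thus ?thesis using pZ[OF i0(1)] x0 by simp
      next
        case False
        hence jH: "j \<in> Hi" using jC Hi_def by auto
        have "U j (tL i0 k) = p j" using posHi[OF jH, of "tL i0 k"] k by simp
        thus ?thesis using pmax[OF jH] x0 by simp
      qed
    qed
    have "dk i0 k < xk i0 k" using fd[OF i0C lk al] x0 pZ[OF i0(1)] zZ by simp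
    moreover have "dk i0 k = xk i0 k" using highd[OF i0C hiall[OF i0C i0L] lk] .
    ultimately show False by simp
  qed
qed

end



lemma half_le: "a \<le> (b + c) / 2 \<Longrightarrow> b \<le> c \<Longrightarrow> a \<le> (c::real)" by argo
lemma half_ge: "a \<ge> (b + c) / 2 \<Longrightarrow> b \<ge> c \<Longrightarrow> a \<ge> (c::real)" by argo

context rob begin

lemma descent:
  fixes T' al \<eta> mid hl ll \<tau> \<tau>' :: real
  assumes rC: "r \<in> C" and low: "\<forall>t\<ge>T'. \<forall>j\<in>C. U j t \<ge> al - \<eta>"
    and K: "T' \<le> tL r K" "tL r K \<le> \<tau>" and tt: "\<tau> \<le> \<tau>'"
    and hi: "U r \<tau> \<ge> hl" and lo: "U r \<tau>' \<le> ll"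
    and c1: "mid < hl" and c2: "ll < (mid + (al - \<eta>)) / 2" and c3: "al - \<eta> \<le> mid"
  shows "\<exists>k. T' \<le> tL r k \<and> xk r k \<le> mid \<and> dk r k < xk r k"
proof (rule ccontr)
  assume nt: "\<not> ?thesis"
  have NA: "dk r k \<ge> xk r k" if "T' \<le> tL r k" "xk r k \<le> mid" for k
    using nt that by (meson not_less)
  define g where "g = (mid + (al - \<eta>)) / 2"
  have gm: "g \<le> mid" using c3 g_def by simp
  have dlow: "dk r k \<ge> g" if lk: "T' \<le> tL r k" and dx: "dk r k < xk r k" for k
  proof -
    have xm: "xk r k > mid" using NA[OF lk] dx by force
    have "\<forall>j\<in>C. U j (tL r k) \<ge> al - \<eta>" using low lk by auto
    hence "dk r k \<ge> (xk r k + (al - \<eta>)) / 2"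
      using dest_ge_mid[where U=U and t="tL r k", OF Csub cardC nf4 rC] by blast
    moreover have "(xk r k + (al - \<eta>)) / 2 \<ge> g" using xm g_def by simp
    ultimately show ?thesis by linarith
  qed
  obtain k0 where k0: "k0 \<ge> K" "tL r k0 \<le> \<tau>" "\<tau> < tL r (Suc k0)" using cur[OF rC K(2)] by blast
  have lk0: "T' \<le> tL r k0" using tL_mono[OF rC k0(1)] K(1) by linarith
  have bas: "U r t \<ge> g" if "\<tau> \<le> t" "t \<le> tL r (Suc k0)" for t
  proof -
    have b1: "between (U r \<tau>) (dk r k0) (U r t)" using seg[OF rC k0(2) that] .
    have b0: "between (xk r k0) (dk r k0) (U r \<tau>)" using seg0[OF rC k0(2)] k0(3) by simp
    show ?thesis
    proof (cases "dk r k0 \<ge> U r \<tau>")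
      case True
      hence "U r t \<ge> U r \<tau>" using b1 by (auto simp: between_def)
      thus ?thesis using hi c1 gm by linarith
    next
      case False
      hence "xk r k0 \<ge> U r \<tau>" using b0 by (auto simp: between_def)
      hence dx: "dk r k0 < xk r k0" using False by simp
      have dg: "dk r k0 \<ge> g" using dlow[OF lk0 dx] .
      have "U r t \<ge> min (U r \<tau>) (dk r k0)" using b1 by (simp add: between_def)
      moreover have "min (U r \<tau>) (dk r k0) \<ge> g" using dg hi c1 gm by simp
      ultimately show ?thesis by linarith
    qed
  qed
  have xs: "xk r k \<ge> g" if "Suc k0 \<le> k" for k
    using that
  proof (induction k rule: dec_induct)
    case base show ?case using bas[of "tL r (Suc k0)"] k0(3) by simp
  next
    case (step k)
    have "tL r k0 \<le> tL r k" using tL_mono[OF rC, of k0 k] step(1) by simp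
    hence lk: "T' \<le> tL r k" using lk0 by linarith
    have b: "between (xk r k) (dk r k) (xk r (Suc k))" by (rule xnext[OF rC])
    show ?case
    proof (cases "dk r k < xk r k")
      case True
      then have "dk r k \<ge> g" using dlow[OF lk] by simp
      thus ?thesis using b step(3) by (auto simp: between_def)
    next
      case False thus ?thesis using b step(3) by (auto simp: between_def)
    qed
  qed
  have "U r \<tau>' \<ge> g"
  proof (cases "\<tau>' \<le> tL r (Suc k0)")
    case True thus ?thesis using bas tt by simp
  next
    case False
    obtain k where k: "k \<ge> Suc k0" "tL r k \<le> \<tau>'" "\<tau>' < tL r (Suc k)"
      using cur[OF rC, of "Suc k0" \<tau>'] False by auto
    have "tL r k0 \<le> tL r k" using tL_mono[OF rC, of k0 k] k(1) by simp
    hence lk: "T' \<le> tL r k" using lk0 by linarith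
    have b: "between (xk r k) (dk r k) (U r \<tau>')" using seg0[OF rC k(2)] k(3) by simp
    have xg: "xk r k \<ge> g" using xs k(1) by simp
    show ?thesis
    proof (cases "dk r k < xk r k")
      case True
      hence "dk r k \<ge> g" using dlow[OF lk] by simp
      thus ?thesis using b xg by (auto simp: between_def)
    next
      case False thus ?thesis using b xg by (auto simp: between_def)
    qed
  qed
  thus False using lo c2 g_def by linarith
qed

lemma refresh: "\<exists>T3\<ge>T0. \<forall>i\<in>C. \<exists>K. T0 \<le> tL i K \<and> tL i K \<le> T3"
proof -
  have "\<forall>i\<in>C. \<exists>k. T0 \<le> tL i k"
  proof
    fix i assume "i \<in> C"
    then obtain k where "tL i k > T0" using tL_unb by blast
    thus "\<exists>k. T0 \<le> tL i k" by (intro exI[of _ k]) simp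
  qed
  then obtain kf where kf: "\<forall>i\<in>C. T0 \<le> tL i (kf i)" by metis
  define T3 where "T3 = Max ((\<lambda>i. tL i (kf i)) ` C)"
  have ge: "tL i (kf i) \<le> T3" if "i \<in> C" for i
    unfolding T3_def using finC that by (intro Max_ge) auto
  obtain i0 where "i0 \<in> C" using Cne by auto
  hence "T0 \<le> T3" using kf ge[of i0] by force
  thus ?thesis using kf ge by blast
qed

lemma bounds: "\<exists>Bl Bu. \<forall>j\<in>C. \<forall>t\<ge>0. Bl \<le> U j t \<and> U j t \<le> Bu"
proof -
  define Bu where "Bu = Max ((\<lambda>j. U j 0) ` C)"
  define Bl where "Bl = Min ((\<lambda>j. U j 0) ` C)"
  have Bu0: "U j 0 \<le> Bu" if "j \<in> C" for j unfolding Bu_def using finC that by (intro Max_ge) auto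
  have Bl0: "Bl \<le> U j 0" if "j \<in> C" for j unfolding Bl_def using finC that by (intro Min_le) auto
  have H0: "U j t = U j 0" if "j \<in> C" "0 \<le> t" "\<forall>k. tL j k < t \<longrightarrow> tL j k < 0" for j t
  proof -
    have "\<not> tL j 0 < 0" using tL0[OF that(1)] by simp
    hence "t \<le> tL j 0" using that(3) by (meson not_less)
    thus ?thesis by (rule pos0[OF that(1) that(2)])
  qed
  have up: "\<forall>j\<in>C. \<forall>t\<ge>0. U j t \<le> Bu"
  proof (rule inv_le[OF order_refl])
    fix j t assume a: "j \<in> C" "0 \<le> t" "\<forall>k. tL j k < t \<longrightarrow> tL j k < 0"
    have "U j t = U j 0" by (rule H0[OF a])
    thus "U j t \<le> Bu" using Bu0[OF a(1)] by simp
  next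
    fix i k assume iC: "i \<in> C" and al: "\<forall>j\<in>C. U j (tL i k) \<le> Bu"
    have "dk i k \<le> (xk i k + Bu) / 2" using dest_le_mid[where U=U and t="tL i k", OF Csub cardC nf4 iC] al by blast
    moreover have "xk i k \<le> Bu" using al iC by blast
    ultimately show "dk i k \<le> Bu" by (rule half_le)
  qed
  have lo: "\<forall>j\<in>C. \<forall>t\<ge>0. U j t \<ge> Bl"
  proof (rule inv_ge[OF order_refl])
    fix j t assume a: "j \<in> C" "0 \<le> t" "\<forall>k. tL j k < t \<longrightarrow> tL j k < 0"
    have "U j t = U j 0" by (rule H0[OF a])
    thus "U j t \<ge> Bl" using Bl0[OF a(1)] by simp
  next
    fix i k assume iC: "i \<in> C" and al: "\<forall>j\<in>C. U j (tL i k) \<ge> Bl"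
    have "dk i k \<ge> (xk i k + Bl) / 2" using dest_ge_mid[where U=U and t="tL i k", OF Csub cardC nf4 iC] al by blast
    moreover have "xk i k \<ge> Bl" using al iC by blast
    ultimately show "dk i k \<ge> Bl" by (rule half_ge)
  qed
  show ?thesis using up lo by blast
qed

end



context rob begin

lemma limsetup:
  "\<exists>A a. (\<forall>\<eta>>0. \<exists>T\<ge>0. \<forall>t\<ge>T. \<forall>j\<in>C. a - \<eta> \<le> U j t \<and> U j t \<le> A + \<eta>) \<and>
         (\<forall>\<theta>>0. \<forall>t. \<exists>s\<ge>t. \<exists>j\<in>C. U j s > A - \<theta>) \<and>
         (\<forall>\<theta>>0. \<forall>t. \<exists>s\<ge>t. \<exists>j\<in>C. U j s < a + \<theta>)"
proof -
  obtain Bl Bu where B: "\<forall>j\<in>C. \<forall>t\<ge>0. Bl \<le> U j t \<and> U j t \<le> Bu" using bounds by blast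
  define Mx where "Mx t = Max ((\<lambda>j. U j t) ` C)" for t
  define mn where "mn t = Min ((\<lambda>j. U j t) ` C)" for t
  have Mx_ge: "U j t \<le> Mx t" if "j \<in> C" for j t unfolding Mx_def using finC that by (intro Max_ge) auto
  have mn_le: "mn t \<le> U j t" if "j \<in> C" for j t unfolding mn_def using finC that by (intro Min_le) auto
  have Mx_in: "\<exists>j\<in>C. U j t = Mx t" for t
  proof -
    have "Mx t \<in> (\<lambda>j. U j t) ` C" unfolding Mx_def using finC Cne by (intro Max_in) auto
    thus ?thesis by auto
  qed
  have mn_in: "\<exists>j\<in>C. U j t = mn t" for t
  proof -
    have "mn t \<in> (\<lambda>j. U j t) ` C" unfolding mn_def using finC Cne by (intro Min_in) auto
    thus ?thesis by auto
  qed
  obtain j0 where j0: "j0 \<in> C" using Cne by auto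
  have MxB: "Mx t \<le> Bu" "Bl \<le> Mx t" if "t \<ge> 0" for t
  proof -
    obtain j where "j \<in> C" "U j t = Mx t" using Mx_in by blast
    thus "Mx t \<le> Bu" using B that by force
    have "Bl \<le> U j0 t" using B that j0 by force
    thus "Bl \<le> Mx t" using Mx_ge[OF j0, of t] by linarith
  qed
  have mnB: "mn t \<ge> Bl" "mn t \<le> Bu" if "t \<ge> 0" for t
  proof -
    obtain j where "j \<in> C" "U j t = mn t" using mn_in by blast
    thus "mn t \<ge> Bl" using B that by force
    have "U j0 t \<le> Bu" using B that j0 by force
    thus "mn t \<le> Bu" using mn_le[OF j0, of t] by linarith
  qed
  define Ab where "Ab t = (SUP s\<in>{t..}. Mx s)" for t
  define ab where "ab t = (INF s\<in>{t..}. mn s)" for t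
  have bddA: "bdd_above (Mx ` {t..})" if "t \<ge> 0" for t
    by (rule bdd_aboveI2[where M=Bu]) (use MxB that in auto)
  have bddb: "bdd_below (mn ` {t..})" if "t \<ge> 0" for t
    by (rule bdd_belowI2[where m=Bl]) (use mnB that in auto)
  have MxAb: "Mx s \<le> Ab t" if "0 \<le> t" "t \<le> s" for s t
    unfolding Ab_def using that by (intro cSUP_upper bddA) auto
  have mnab: "ab t \<le> mn s" if "0 \<le> t" "t \<le> s" for s t
    unfolding ab_def using that by (intro cINF_lower bddb) auto
  have AbB: "Ab t \<ge> Bl" if "t \<ge> 0" for t using MxAb[OF that order_refl] MxB(2)[OF that] by linarith
  have abB: "ab t \<le> Bu" if "t \<ge> 0" for t using mnab[OF that order_refl] mnB(2)[OF that] by linarith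
  define A where "A = (INF t\<in>{0..}. Ab t)"
  define a where "a = (SUP t\<in>{0..}. ab t)"
  have bddAb: "bdd_below (Ab ` {0..})" by (rule bdd_belowI2[where m=Bl]) (use AbB in auto)
  have bddab: "bdd_above (ab ` {0..})" by (rule bdd_aboveI2[where M=Bu]) (use abB in auto)
  have AleAb: "A \<le> Ab t" if "t \<ge> 0" for t unfolding A_def using that by (intro cINF_lower bddAb) auto
  have able: "ab t \<le> a" if "t \<ge> 0" for t unfolding a_def using that by (intro cSUP_upper bddab) auto
  have P1: "\<exists>T\<ge>0. \<forall>t\<ge>T. \<forall>j\<in>C. a - \<eta> \<le> U j t \<and> U j t \<le> A + \<eta>" if "\<eta> > 0" for \<eta>
  proof -
    have "A < A + \<eta>" using that by simp
    hence "\<exists>x\<in>{0..}. Ab x < A + \<eta>" unfolding A_def using cINF_less_iff[OF _ bddAb] by blast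
    then obtain T1 where T1: "T1 \<ge> 0" "Ab T1 < A + \<eta>" by auto
    have "a - \<eta> < a" using that by simp
    hence "\<exists>x\<in>{0..}. a - \<eta> < ab x" unfolding a_def using less_cSUP_iff[OF _ bddab] by blast
    then obtain T2 where T2: "T2 \<ge> 0" "a - \<eta> < ab T2" by auto
    show ?thesis
    proof (intro exI[of _ "max T1 T2"] conjI allI impI ballI)
      show "0 \<le> max T1 T2" using T1 by simp
      fix t j assume t: "max T1 T2 \<le> t" and j: "j \<in> C"
      have "U j t \<le> Mx t" using Mx_ge[OF j] .
      also have "\<dots> \<le> Ab T1" using MxAb[OF T1(1)] t by simp
      finally show "U j t \<le> A + \<eta>" using T1 by linarith
      have "ab T2 \<le> mn t" using mnab[OF T2(1)] t by simp
      also have "\<dots> \<le> U j t" using mn_le[OF j] .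
      finally show "a - \<eta> \<le> U j t" using T2 by linarith
    qed
  qed
  have P2: "\<exists>s\<ge>t. \<exists>j\<in>C. U j s > A - \<theta>" if "\<theta> > 0" for \<theta> t
  proof -
    define t' where "t' = max t 0"
    have "A - \<theta> < Ab t'" using AleAb[of t'] that t'_def by simp
    hence "\<exists>x\<in>{t'..}. A - \<theta> < Mx x" unfolding Ab_def using less_cSUP_iff[OF _ bddA] t'_def by auto
    then obtain s where s: "s \<ge> t'" "A - \<theta> < Mx s" by auto
    obtain j where j: "j \<in> C" "U j s = Mx s" using Mx_in by blast
    have "s \<ge> t" using s(1) t'_def by simp
    moreover have "\<exists>j\<in>C. U j s > A - \<theta>" using j s(2) by (intro bexI[of _ j]) auto
    ultimately show ?thesis by blast
  qed
  have P3: "\<exists>s\<ge>t. \<exists>j\<in>C. U j s < a + \<theta>" if "\<theta> > 0" for \<theta> t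
  proof -
    define t' where "t' = max t 0"
    have "ab t' < a + \<theta>" using able[of t'] that t'_def by simp
    hence "\<exists>x\<in>{t'..}. mn x < a + \<theta>" unfolding ab_def using cINF_less_iff[OF _ bddb] t'_def by auto
    then obtain s where s: "s \<ge> t'" "mn s < a + \<theta>" by auto
    obtain j where j: "j \<in> C" "U j s = mn s" using mn_in by blast
    have "s \<ge> t" using s(1) t'_def by simp
    moreover have "\<exists>j\<in>C. U j s < a + \<theta>" using j s(2) by (intro bexI[of _ j]) auto
    ultimately show ?thesis by blast
  qed
  show ?thesis using P1 P2 P3 by blast
qed

end



context rob begin

lemma key:
  fixes A a :: real
  assumes P1: "\<forall>\<eta>>0. \<exists>T\<ge>0. \<forall>t\<ge>T. \<forall>j\<in>C. a - \<eta> \<le> U j t \<and> U j t \<le> A + \<eta>"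
    and P2: "\<forall>\<theta>>0. \<forall>t. \<exists>s\<ge>t. \<exists>j\<in>C. U j s > A - \<theta>"
    and P3: "\<forall>\<theta>>0. \<forall>t. \<exists>s\<ge>t. \<exists>j\<in>C. U j s < a + \<theta>"
    and wpos: "A - a > 0"
  shows False
proof -
  define w where "w = A - a"
  have w0: "w > 0" using wpos w_def by simp
  define dmin where "dmin = Min (\<delta> ` C)"
  have dmin0: "dmin > 0" unfolding dmin_def using finC Cne dpos by simp
  have dle: "dmin \<le> \<delta> i" if "i \<in> C" for i unfolding dmin_def using finC that by (intro Min_le) auto
  define \<eta> where "\<eta> = min (dmin / 2) (w / 40)"
  define \<xi> where "\<xi> = w / 8"
  have \<eta>0: "\<eta> > 0" using dmin0 w0 \<eta>_def by simp
  have \<eta>1: "2 * \<eta> \<le> dmin" unfolding \<eta>_def by argo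
  have \<eta>2: "40 * \<eta> \<le> w" unfolding \<eta>_def by argo
  have \<xi>w: "8 * \<xi> = w" by (simp add: \<xi>_def)
  obtain T where T: "T \<ge> 0" "\<forall>t\<ge>T. \<forall>j\<in>C. a - \<eta> \<le> U j t \<and> U j t \<le> A + \<eta>" using P1 \<eta>0 by blast
  have up: "\<forall>t\<ge>T. \<forall>j\<in>C. U j t \<le> A + \<eta>" using T by blast
  have lowb: "\<forall>t\<ge>T. \<forall>j\<in>C. a - \<eta> \<le> U j t" using T by blast
  have lsA: "\<forall>t. \<exists>s\<ge>t. \<exists>j\<in>C. U j s > A - \<eta>" using P2 \<eta>0 by blast
  have lsa: "\<forall>t. \<exists>s\<ge>t. \<exists>j\<in>C. U j s < a + \<eta>" using P3 \<eta>0 by blast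
  have c1: "(A - \<xi>) + (A + \<eta>) \<le> 2 * (A - \<eta>)" using \<eta>2 \<xi>w w_def \<eta>0 by argo
  have c2g: "2 * \<eta> \<le> min (\<delta> i) ((\<xi> - \<eta>) / 2)" if iC: "i \<in> C" for i
  proof -
    have "2 * \<eta> \<le> \<delta> i" using \<eta>1 dle[OF iC] by linarith
    moreover have "2 * \<eta> \<le> (\<xi> - \<eta>) / 2" using \<eta>2 \<xi>w \<eta>0 by argo
    ultimately show ?thesis by simp
  qed
  have c2: "\<forall>i\<in>C. A + \<eta> - min (\<delta> i) ((\<xi> - \<eta>) / 2) \<le> A - \<eta>" using c2g by fastforce
  have c2': "\<forall>i\<in>C. - a + \<eta> - min (\<delta> i) ((\<xi> - \<eta>) / 2) \<le> - a - \<eta>" using c2g by fastforce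
  have c3: "\<eta> \<le> \<xi>" using \<eta>2 \<xi>w \<eta>0 by argo
  have c1': "(- a - \<xi>) + (- a + \<eta>) \<le> 2 * (- a - \<eta>)" using \<eta>2 \<xi>w w_def \<eta>0 by argo
  interpret N: rob n f C "\<lambda>j t. - U j t" \<delta> tL tMs tMe by (rule rob_neg)
  obtain T2' where T2': "T2' \<ge> T" "\<forall>i\<in>C. \<exists>K. T \<le> tL i K \<and> tL i K \<le> T2'" using refresh by blast
  obtain T3 where T3: "T3 \<ge> T2'" "\<forall>i\<in>C. \<exists>K. T2' \<le> tL i K \<and> tL i K \<le> T3" using refresh by blast
  have up3: "\<forall>t\<ge>T3. \<forall>j\<in>C. U j t \<le> A + \<eta>" using up T2'(1) T3(1) by auto
  obtain \<tau>1 where \<tau>1: "\<tau>1 \<ge> T3" "card {j\<in>C. U j \<tau>1 \<ge> A - \<xi>} \<ge> card C - 2*f"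
    using top_recurrent[where A=A and \<eta>=\<eta> and \<theta>=\<eta> and \<xi>=\<xi> and T'=T3, OF up3 lsA c1 c2 c3] by blast
  have upN: "\<forall>t\<ge>\<tau>1. \<forall>j\<in>C. - U j t \<le> - a + \<eta>"
  proof (intro allI impI ballI)
    fix t j assume "\<tau>1 \<le> t" "j \<in> C"
    hence "a - \<eta> \<le> U j t" using lowb \<tau>1(1) T3(1) T2'(1) by auto
    thus "- U j t \<le> - a + \<eta>" by simp
  qed
  have lsN: "\<forall>t. \<exists>s\<ge>t. \<exists>j\<in>C. - U j s > - a - \<eta>"
  proof
    fix t
    obtain s j where "s \<ge> t" "j \<in> C" "U j s < a + \<eta>" using lsa by blast
    thus "\<exists>s\<ge>t. \<exists>j\<in>C. - U j s > - a - \<eta>" by (intro exI[of _ s] conjI bexI[of _ j]) auto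
  qed
  obtain \<tau>2 where \<tau>2: "\<tau>2 \<ge> \<tau>1" "card {j\<in>C. - U j \<tau>2 \<ge> - a - \<xi>} \<ge> card C - 2*f"
    using N.top_recurrent[where A="-a" and \<eta>=\<eta> and \<theta>=\<eta> and \<xi>=\<xi> and T'=\<tau>1, OF upN lsN c1' c2' c3] by blast
  have \<tau>2': "card {j\<in>C. U j \<tau>2 \<le> a + \<xi>} \<ge> card C - 2*f"
  proof -
    have "{j\<in>C. - U j \<tau>2 \<ge> - a - \<xi>} = {j\<in>C. U j \<tau>2 \<le> a + \<xi>}" by auto
    thus ?thesis using \<tau>2(2) by simp
  qed
  define S1 where "S1 = {j\<in>C. U j \<tau>1 \<ge> A - \<xi>}"
  define S2 where "S2 = {j\<in>C. U j \<tau>2 \<le> a + \<xi>}"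
  have mC: "card C \<ge> 4*f + 1" using cardC nf by linarith
  have "S1 \<inter> S2 \<noteq> {}"
  proof
    assume e: "S1 \<inter> S2 = {}"
    have "card (S1 \<union> S2) = card S1 + card S2" using e finC S1_def S2_def by (intro card_Un_disjoint) auto
    moreover have "card (S1 \<union> S2) \<le> card C" using finC S1_def S2_def by (intro card_mono) auto
    moreover have "card C - 2*f \<le> card S1" "card C - 2*f \<le> card S2" unfolding S1_def S2_def
      using \<tau>1(2) \<tau>2' by auto
    ultimately show False using mC by linarith
  qed
  then obtain r where r: "r \<in> C" "U r \<tau>1 \<ge> A - \<xi>" "U r \<tau>2 \<le> a + \<xi>" using S1_def S2_def by auto
  obtain K where K: "T2' \<le> tL r K" "tL r K \<le> T3" using T3(2) r(1) by blast
  have K2: "tL r K \<le> \<tau>1" using K(2) \<tau>1(1) by linarith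
  define mid where "mid = (a + A) / 2"
  have m2: "2 * mid = a + A" by (simp add: mid_def)
  have lowb2: "\<forall>t\<ge>T2'. \<forall>j\<in>C. U j t \<ge> a - \<eta>" using lowb T2'(1) by force
  have d1: "mid < A - \<xi>" using m2 \<xi>w w_def w0 by argo
  have d2: "a + \<xi> < (mid + (a - \<eta>)) / 2" using m2 \<xi>w w_def \<eta>2 w0 \<eta>0 by argo
  have d3: "a - \<eta> \<le> mid" using m2 w_def w0 \<eta>0 by argo
  obtain k where k: "T2' \<le> tL r k" "xk r k \<le> mid" "dk r k < xk r k"
    using descent[where r=r and T'=T2' and al=a and \<eta>=\<eta> and mid=mid and hl="A - \<xi>" and ll="a + \<xi>"
        and \<tau>=\<tau>1 and \<tau>'=\<tau>2 and K=K, OF r(1) lowb2 K(1) K2 \<tau>2(1) r(2) r(3) d1 d2 d3] by blast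
  define \<sigma> where "\<sigma> = tL r k"
  define S where "S = {j\<in>C. U j \<sigma> \<le> mid}"
  have cS: "card S \<ge> card C - f"
  proof -
    have "card {j\<in>C. U j \<sigma> \<le> xk r k} \<ge> card C - f" unfolding \<sigma>_def
      using dest_lt_count[where U=U and t="tL r k", OF Csub cardC nf4 r(1) k(3)] .
    moreover have "card {j\<in>C. U j \<sigma> \<le> xk r k} \<le> card S" unfolding S_def using finC k(2) by (intro card_mono) auto
    ultimately show ?thesis by linarith
  qed
  have SC: "S \<subseteq> C" using S_def by auto
  define y where "y = (mid + (A + \<eta>)) / 2"
  have y2: "2 * y = mid + (A + \<eta>)" by (simp add: y_def)
  have midy: "mid \<le> y" using y2 m2 w_def w0 \<eta>0 by argo
  have \<sigma>T: "\<sigma> \<ge> T2'" using k(1) \<sigma>_def by simp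
  have R: "\<forall>j\<in>S. \<forall>t\<ge>\<sigma>. U j t \<le> y"
  proof (rule inv_le[OF SC])
    fix j t assume jS: "j \<in> S" and t: "\<sigma> \<le> t" and nl: "\<forall>k. tL j k < t \<longrightarrow> tL j k < \<sigma>"
    have jC: "j \<in> C" using jS S_def by auto
    have j\<sigma>: "U j \<sigma> \<le> mid" using jS S_def by auto
    obtain Kj where Kj: "T \<le> tL j Kj" "tL j Kj \<le> T2'" using T2'(2) jC by blast
    have "tL j Kj \<le> \<sigma>" using Kj \<sigma>T by linarith
    then obtain k' where k': "k' \<ge> Kj" "tL j k' \<le> \<sigma>" "\<sigma> < tL j (Suc k')" using cur[OF jC] by blast
    have tle: "t \<le> tL j (Suc k')"
    proof (rule ccontr)
      assume "\<not> t \<le> tL j (Suc k')"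
      hence "tL j (Suc k') < t" by simp
      hence "tL j (Suc k') < \<sigma>" using nl by blast
      thus False using k'(3) by simp
    qed
    have lk: "T \<le> tL j k'" using tL_mono[OF jC k'(1)] Kj(1) by linarith
    have b1: "between (U j \<sigma>) (dk j k') (U j t)" using seg[OF jC k'(2) t tle] .
    have b0: "between (xk j k') (dk j k') (U j \<sigma>)" using seg0[OF jC k'(2)] k'(3) by simp
    have "\<forall>jj\<in>C. U jj (tL j k') \<le> A + \<eta>" using up lk by blast
    hence dm: "dk j k' \<le> (xk j k' + (A + \<eta>)) / 2"
      using dest_le_mid[where U=U and t="tL j k'", OF Csub cardC nf4 jC] by blast
    show "U j t \<le> y"
    proof (cases "dk j k' \<ge> xk j k'")
      case True
      hence "xk j k' \<le> U j \<sigma>" using b0 by (auto simp: between_def)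
      hence "xk j k' \<le> mid" using j\<sigma> by simp
      hence "(xk j k' + (A + \<eta>)) / 2 \<le> y" unfolding y_def by simp
      hence "dk j k' \<le> y" using dm by linarith
      hence "max (U j \<sigma>) (dk j k') \<le> y" using j\<sigma> midy by simp
      moreover have "U j t \<le> max (U j \<sigma>) (dk j k')" using b1 by (simp add: between_def)
      ultimately show ?thesis by linarith
    next
      case False
      hence "dk j k' \<le> U j \<sigma>" using b0 by (auto simp: between_def)
      hence "U j t \<le> U j \<sigma>" using b1 by (auto simp: between_def)
      thus ?thesis using j\<sigma> midy by linarith
    qed
  next
    fix i k assume iS: "i \<in> S" and al: "\<forall>j\<in>S. U j (tL i k) \<le> y"
    have iC: "i \<in> C" using iS S_def by auto
    have "card S \<le> card {j\<in>C. U j (tL i k) \<le> y}" using finC al SC by (intro card_mono) auto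
    hence "card {j\<in>C. U j (tL i k) \<le> y} \<ge> card C - f" using cS by linarith
    moreover have "xk i k \<le> y" using al iS by blast
    ultimately show "dk i k \<le> y" using dest_le_level[where U=U and t="tL i k", OF Csub cardC nf4 iC] by blast
  qed
  have up\<sigma>: "\<forall>t\<ge>\<sigma>. \<forall>j\<in>C. U j t \<le> A + \<eta>" using up \<sigma>T T2'(1) by force
  obtain \<tau>3 where \<tau>3: "\<tau>3 \<ge> \<sigma>" "card {j\<in>C. U j \<tau>3 \<ge> A - \<xi>} \<ge> card C - 2*f"
    using top_recurrent[where A=A and \<eta>=\<eta> and \<theta>=\<eta> and \<xi>=\<xi> and T'=\<sigma>, OF up\<sigma> lsA c1 c2 c3] by blast
  define S3 where "S3 = {j\<in>C. U j \<tau>3 \<ge> A - \<xi>}"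
  have yA: "y < A - \<xi>" using y2 m2 \<xi>w w_def w0 \<eta>2 \<eta>0 by argo
  have "S \<inter> S3 = {}"
  proof (rule ccontr)
    assume "S \<inter> S3 \<noteq> {}"
    then obtain j where "j \<in> S" "j \<in> S3" by auto
    hence "U j \<tau>3 \<le> y" "U j \<tau>3 \<ge> A - \<xi>" using R \<tau>3(1) S3_def by auto
    thus False using yA by linarith
  qed
  hence "card (S \<union> S3) = card S + card S3" using finC SC S3_def by (intro card_Un_disjoint) (auto intro: finite_subset)
  moreover have "card (S \<union> S3) \<le> card C" using finC SC S3_def by (intro card_mono) auto
  moreover have "card C - 2*f \<le> card S3" unfolding S3_def using \<tau>3(2) by auto
  ultimately show False using cS mC by linarith
qed

lemma conv: "\<forall>\<epsilon>>0. \<exists>t\<^sub>\<epsilon>. \<forall>t>t\<^sub>\<epsilon>. \<forall>i\<in>C. \<forall>j\<in>C. \<bar>U i t - U j t\<bar> < \<epsilon>"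
proof (intro allI impI)
  fix \<epsilon> :: real assume \<epsilon>: "\<epsilon> > 0"
  obtain A a where P1: "\<forall>\<eta>>0. \<exists>T\<ge>0. \<forall>t\<ge>T. \<forall>j\<in>C. a - \<eta> \<le> U j t \<and> U j t \<le> A + \<eta>"
    and P2: "\<forall>\<theta>>0. \<forall>t. \<exists>s\<ge>t. \<exists>j\<in>C. U j s > A - \<theta>"
    and P3: "\<forall>\<theta>>0. \<forall>t. \<exists>s\<ge>t. \<exists>j\<in>C. U j s < a + \<theta>"
    using limsetup by blast
  have "\<not> A - a > 0" using key[OF P1 P2 P3] by blast
  hence Aa: "A - a \<le> 0" by simp
  have e3: "\<epsilon> / 3 > 0" using \<epsilon> by simp
  obtain T where T: "\<forall>t\<ge>T. \<forall>j\<in>C. a - \<epsilon> / 3 \<le> U j t \<and> U j t \<le> A + \<epsilon> / 3" using P1 e3 by blast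
  show "\<exists>t\<^sub>\<epsilon>. \<forall>t>t\<^sub>\<epsilon>. \<forall>i\<in>C. \<forall>j\<in>C. \<bar>U i t - U j t\<bar> < \<epsilon>"
  proof (intro exI[of _ T] allI impI ballI)
    fix t i j assume t: "T < t" and i: "i \<in> C" and j: "j \<in> C"
    have h: "a - \<epsilon> / 3 \<le> U i t" "U i t \<le> A + \<epsilon> / 3" "a - \<epsilon> / 3 \<le> U j t" "U j t \<le> A + \<epsilon> / 3"
      using T t i j by auto
    show "\<bar>U i t - U j t\<bar> < \<epsilon>" using h Aa \<epsilon> by argo
  qed
qed

end


theorem mainTheorem1:
  fixes n f :: nat
    and C :: "nat set"
    and U :: "nat \<Rightarrow> real \<Rightarrow> real"
    and \<delta> :: "nat \<Rightarrow> real"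
    and tL tMs tMe :: "nat \<Rightarrow> nat \<Rightarrow> real"
  assumes "f \<ge> 1"
    and "n \<ge> 5 * f + 1"
    and "C \<subseteq> {..<n}"
    and "card C \<ge> n - f"
    and "\<forall>i\<in>C. correct_robot n f U i (\<delta> i) (tL i) (tMs i) (tMe i)"
  shows "\<forall>\<epsilon>>0. \<exists>t\<^sub>\<epsilon>. \<forall>t>t\<^sub>\<epsilon>. \<forall>i\<in>C. \<forall>j\<in>C. \<bar>U i t - U j t\<bar> < \<epsilon>"
proof -
  interpret rob n f C U \<delta> tL tMs tMe
    by (rule rob.intro) (use assms in auto)
  show ?thesis by (rule conv)
qed

end
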